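(* Let $\rho_Q(x)$ be a family of density operators on a quantum system $Q$, depending differentiably on a real parameter $x$. Let $\{\mathcal{F}_\alpha\}_{\alpha=1}^{J}$ be a selection measurement on $Q$, where each $\mathcal{F}_\alpha(\rho)=\sum_{j=0}^{J_\alpha-1}M_{\alpha,j}\rho M_{\alpha,j}^\dagger$ is a quantum operation with Kraus operators $M_{\alpha,j}$ and $\sum_{\alpha=1}^J\sum_{j}M_{\alpha,j}^\dagger M_{\alpha,j}=\mathbb{1}_Q$. Write $p(\alpha|x)=\mathrm{Tr}\{\mathcal{F}_\alpha[\rho_Q(x)]\}$ (assumed positive) and $\sigma_{Q|\alpha}(x)=\mathcal{F}_\alpha[\rho_Q(x)]/p(\alpha|x)$. Let $\checkmark\subseteq\{1,\dots,J\}$ be a set of favorable outcomes with complement $\times$, and put $p(\checkmark|x)=\sum_{\alpha\in\checkmark}p(\alpha|x)$, $p(\times|x)=1-p(\checkmark|x)$, both assumed positive. Let $\{|f_\alpha\rangle\}_{\alpha=1}^J$ be orthonormal ancilla states, let $|f_0\rangle$ be an ancilla state orthogonal to all $|f_\alpha\rangle$ with $\alpha\in\checkmark$, and let $|\phi\rangle$ be a fixed state of $Q$ independent of $x$. Define $$\sigma_{QA}(x)=\sum_{\alpha=1}^J p(\alpha|x)\,\sigma_{Q|\alpha}(x)\otimes|f_\alpha\rangle\langle f_\alpha|,$$ $$\sigma_{QA,\checkmark}(x)=\sum_{\alpha\in\checkmark}p(\alpha|x)\,\sigma_{Q|\alpha}(x)\otimes|f_\alpha\rangle\langle f_\alpha|+p(\times|x)\,|\phi\rangle\langle\phi|\otimes|f_0\rangle\langle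 f_0|,$$ $$\sigma_{QA|\checkmark}(x)=\sum_{\alpha\in\checkmark}\frac{p(\alpha|x)}{p(\checkmark|x)}\,\sigma_{Q|\alpha}(x)\otimes|f_\alpha\rangle\langle f_\alpha|.$$ Then the quantum Fisher informations satisfy $$I_{\rho_Q}(x)\ge I_{\sigma_{QA}}(x)\ge I_{\sigma_{QA,\checkmark}}(x)\ge p(\checkmark|x)\,I_{\sigma_{QA|\checkmark}}(x).$$ Moreover, when $\checkmark=\{\alpha\}$ consists of a single outcome, $p(\checkmark|x)\,I_{\sigma_{QA|\checkmark}}(x)=p(\alpha|x)\,I_{\sigma_{Q|\alpha}}(x)$, so the final entry of the chain is $p(\alpha|x)I_{\sigma_{Q|\alpha}}(x)$.
   Context: For a differentiable family of density operators $\rho(x)$, the quantum Fisher information is $I_\rho(x)=\mathrm{Tr}[\rho(x)L(x)^2]$, where the symmetric logarithmic derivative $L(x)$ is a Hermitian operator satisfying $\partial_x\rho(x)=\tfrac12[L(x)\rho(x)+\rho(x)L(x)]$. *)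

theory Defs
  imports "HOL-Analysis.Analysis"
begin

text \<open>Finite-dimensional quantum systems: operators on a system with (finite) basis
  index type 'n are complex matrices of type complex^'n^'n.\<close>

type_synonym 'n cmat = "complex^'n^'n"

definition adj :: "('n::finite) cmat \<Rightarrow> 'n cmat" where
  "adj A = (\<chi> i j. cnj (A $ j $ i))"

definition hermitian :: "('n::finite) cmat \<Rightarrow> bool" where
  "hermitian A \<longleftrightarrow> adj A = A"

definition cinner :: "complex^('n::finite) \<Rightarrow> complex^'n \<Rightarrow> complex" where
  "cinner v w = (\<Sum>i\<in>UNIV. cnj (v $ i) * w $ i)"

definition psd :: "('n::finite) cmat \<Rightarrow> bool" where
  "psd A \<longleftrightarrow> hermitian A \<and> (\<forall>v. 0 \<le> Re (cinner v (A *v v)))"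

definition density_op :: "('n::finite) cmat \<Rightarrow> bool" where
  "density_op A \<longleftrightarrow> psd A \<and> trace A = 1"

definition ket_bra :: "complex^('n::finite) \<Rightarrow> 'n cmat" where
  "ket_bra v = (\<chi> i j. v $ i * cnj (v $ j))"

definition tensor :: "('n::finite) cmat \<Rightarrow> ('a::finite) cmat \<Rightarrow> ('n \<times> 'a) cmat" where
  "tensor A B = (\<chi> p q. A $ fst p $ fst q * B $ snd p $ snd q)"

definition kraus_op :: "(nat \<Rightarrow> ('n::finite) cmat) \<Rightarrow> nat \<Rightarrow> 'n cmat \<Rightarrow> 'n cmat" where
  "kraus_op M k \<rho> = (\<Sum>j<k. M j ** \<rho> ** adj (M j))"

definition qfi :: "(real \<Rightarrow> ('n::finite) cmat) \<Rightarrow> real \<Rightarrow> real" where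
  "qfi \<rho> x = (SOME I. \<exists>D L. (\<rho> has_vector_derivative D) (at x) \<and> hermitian L \<and>
      D = (1/2) *\<^sub>R (L ** \<rho> x + \<rho> x ** L) \<and> I = Re (trace (\<rho> x ** L ** L)))"

end

theory Submission
  imports Defs
begin

definition cadj :: "complex^'n^'m \<Rightarrow> complex^'m^'n" where
  "cadj A = (\<chi> i j. cnj (A $ j $ i))"

lemma scR: "(r::real) *\<^sub>R (z::complex) = of_real r * z" by (simp add: scaleR_conv_of_real)
lemma cnj_mult_self: "cnj z * z = of_real ((cmod z)^2)" by (simp add: complex_norm_square mult.commute del: of_real_power)

lemma adj_cadj: "adj A = cadj A" by (simp add: adj_def cadj_def)

lemma cadj_nth[simp]: "cadj A $ i $ j = cnj (A $ j $ i)" by (simp add: cadj_def)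

lemma cadj_cadj[simp]: "cadj (cadj A) = A" by (simp add: vec_eq_iff)

lemma cadj_mult: "cadj (A ** B) = cadj B ** cadj A"
  by (simp add: vec_eq_iff matrix_matrix_mult_def mult.commute)

lemma cadj_add: "cadj (A + B) = cadj A + cadj B" by (simp add: vec_eq_iff)
lemma cadj_diff: "cadj (A - B) = cadj A - cadj B" by (simp add: vec_eq_iff)
lemma cadj_scaleR: "cadj (c *\<^sub>R A) = c *\<^sub>R cadj A" by (simp add: vec_eq_iff scR)
lemma cadj_zero[simp]: "cadj 0 = 0" by (simp add: vec_eq_iff)
lemma cadj_mat[simp]: "cadj (mat 1) = mat 1" by (simp add: vec_eq_iff mat_def)
lemma cadj_sum: "cadj (\<Sum>k\<in>K. A k) = (\<Sum>k\<in>K. cadj (A k))"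
  by (induction K rule: infinite_finite_induct) (auto simp: cadj_add)

lemma matrix_diff_ldistrib: "(A::'a::ring_1^'n^'m) ** (B - C) = A ** B - A ** C"
  by (simp add: vec_eq_iff matrix_matrix_mult_def sum_subtractf right_diff_distrib)
lemma matrix_diff_rdistrib: "((B::'a::ring_1^'n^'m) - C) ** A = B ** A - C ** A"
  by (simp add: vec_eq_iff matrix_matrix_mult_def sum_subtractf left_diff_distrib)
lemma matrix_add_rdistrib': "((B::'a::semiring_1^'n^'m) + C) ** A = B ** A + C ** A"
  by (simp add: vec_eq_iff matrix_matrix_mult_def sum.distrib distrib_right)
lemma matrix_sum_ldistrib: "(A::'a::semiring_1^'n^'m) ** (\<Sum>k\<in>K. B k) = (\<Sum>k\<in>K. A ** B k)"
  by (induction K rule: infinite_finite_induct) (auto simp: matrix_add_ldistrib)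
lemma matrix_sum_rdistrib: "(\<Sum>k\<in>K. B k) ** (A::'a::semiring_1^'p^'n) = (\<Sum>k\<in>K. B k ** A)"
  by (induction K rule: infinite_finite_induct) (auto simp: matrix_add_rdistrib')
lemma matrix_scaleR_left: "(c *\<^sub>R A) ** (B::complex^'p^'n) = c *\<^sub>R (A ** B)"
  by (simp add: vec_eq_iff matrix_matrix_mult_def scR sum_distrib_left mult.assoc)
lemma matrix_scaleR_right: "(A::complex^'n^'m) ** (c *\<^sub>R B) = c *\<^sub>R (A ** B)"
  by (simp add: vec_eq_iff matrix_matrix_mult_def scR sum_distrib_left mult_ac)

lemma trace_cyc: "trace ((A::complex^'n^'m) ** B) = trace (B ** A)"
  by (rule trace_mul_sym)
lemma trace_sum: "trace (\<Sum>k\<in>K. (A k::complex^'n^'n)) = (\<Sum>k\<in>K. trace (A k))"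
  by (induction K rule: infinite_finite_induct) (auto simp: trace_add trace_0[simplified])
lemma trace_scaleR: "trace (c *\<^sub>R (A::complex^'n^'n)) = c *\<^sub>R trace A"
  by (simp add: trace_def scaleR_sum_right)
lemma trace_cadj: "trace (cadj A) = cnj (trace A)"
  by (simp add: trace_def)

lemma hermitian_cadj: "hermitian A \<longleftrightarrow> cadj A = A"
  by (simp add: hermitian_def adj_cadj)

definition cinn :: "complex^'n \<Rightarrow> complex^'n \<Rightarrow> complex" where
  "cinn v w = (\<Sum>i\<in>UNIV. cnj (v $ i) * w $ i)"

lemma cinner_cinn: "cinner v w = cinn v w" by (simp add: cinner_def cinn_def)

lemma cinn_mv: "cinn u ((A::complex^'n^'m) *v v) = cinn (cadj A *v u) v"
  apply (simp add: cinn_def matrix_vector_mult_def sum_distrib_left sum_distrib_right mult_ac)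
  by (rule sum.swap)

lemma cinn_cnj: "cnj (cinn u v) = cinn v u"
  by (simp add: cinn_def mult.commute)

lemma cinn_self_Re: "Re (cinn v v) = (\<Sum>i\<in>UNIV. (cmod (v$i))^2)"
  by (simp add: cinn_def cnj_mult_self)
lemma cinn_self_real: "cinn v v = of_real (Re (cinn v v))"
  by (simp add: cinn_def cnj_mult_self cinn_self_Re of_real_sum del: of_real_power)

lemma cinn_self_nonneg: "0 \<le> Re (cinn v v)" by (simp add: cinn_self_Re sum_nonneg)

lemma cinn_self_zero: "Re (cinn v v) = 0 \<Longrightarrow> v = 0"
  by (simp add: cinn_self_Re sum_nonneg_eq_0_iff vec_eq_iff)

lemma cinn_add_right: "cinn u (v + w) = cinn u v + cinn u w"
  by (simp add: cinn_def distrib_left sum.distrib)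
lemma cinn_add_left: "cinn (u + v) w = cinn u w + cinn v w"
  by (simp add: cinn_def distrib_right sum.distrib)
lemma cinn_scale_right: "cinn u (c *s v) = c * cinn u v"
  by (simp add: cinn_def sum_distrib_left mult_ac)
lemma cinn_scale_left: "cinn (c *s u) v = cnj c * cinn u v"
  by (simp add: cinn_def sum_distrib_left mult_ac)
lemma cinn_scaleR_right: "cinn u (c *\<^sub>R v) = c * cinn u v"
  by (simp add: cinn_def sum_distrib_left mult_ac scR)
lemma cinn_scaleR_left: "cinn (c *\<^sub>R u) v = c * cinn u v"
  by (simp add: cinn_def sum_distrib_left mult_ac scR)
lemma cinn_zero_right[simp]: "cinn u 0 = 0" by (simp add: cinn_def)
lemma cinn_zero_left[simp]: "cinn 0 u = 0" by (simp add: cinn_def)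

lemma psd_alt: "psd A \<longleftrightarrow> cadj A = A \<and> (\<forall>v. 0 \<le> Re (cinn v (A *v v)))"
  by (simp add: psd_def hermitian_cadj cinner_cinn)

lemma trace_sandwich:
  "trace ((C::complex^'n^'m) ** \<rho> ** cadj C) =
   (\<Sum>i\<in>UNIV. cinn (\<chi> l. cnj (C$i$l)) (\<rho> *v (\<chi> l. cnj (C$i$l))))"
  apply (simp add: trace_def cinn_def matrix_matrix_mult_def matrix_vector_mult_def
      sum_distrib_left sum_distrib_right mult_ac)
  apply (rule sum.cong, simp)
  apply (rule sum.swap)
  done

lemma trace_sandwich_nonneg:
  assumes "psd \<rho>" shows "0 \<le> Re (trace ((C::complex^'n^'m) ** \<rho> ** cadj C))"
  using assms by (simp add: trace_sandwich psd_alt sum_nonneg)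

lemma quad_zero:
  fixes a b :: real
  assumes "b \<ge> 0" "\<And>s. 0 \<le> 2 * s * a + s^2 * b"
  shows "a = 0"
proof (rule ccontr)
  assume "a \<noteq> 0"
  define t where "t = 1 / (b + 1)"
  have t0: "t > 0" using assms(1) by (simp add: t_def)
  have tb: "t * b < 1" using assms(1) by (simp add: t_def field_simps)
  have "2 * (-a*t) * a + (-a*t)^2 * b = a^2 * t * (t * b - 2)"
    by (simp add: power2_eq_square algebra_simps)
  also have "\<dots> < 0" using \<open>a \<noteq> 0\<close> t0 tb
    by (intro mult_pos_neg) auto
  finally show False using assms(2)[of "-a*t"] by simp
qed

lemma mv_scaleR: "(A::complex^'n^'m) *v (c *\<^sub>R v) = c *\<^sub>R (A *v v)"
  by (simp add: vec_eq_iff matrix_vector_mult_def scR sum_distrib_left mult_ac)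
lemma matrix_neg_left: "(- (A::complex^'n^'m)) ** B = - (A ** B)"
  by (simp add: vec_eq_iff matrix_matrix_mult_def sum_negf)

lemma psd_zero:
  assumes "psd \<rho>" "Re (cinn w (\<rho> *v w)) = 0"
  shows "\<rho> *v w = 0"
proof -
  have H: "cadj \<rho> = \<rho>" and P: "\<And>v. 0 \<le> Re (cinn v (\<rho> *v v))" using assms(1) by (auto simp: psd_alt)
  have a0: "Re (cinn u (\<rho> *v w)) = 0" for u
  proof (rule quad_zero)
    show "0 \<le> Re (cinn u (\<rho> *v u))" by (rule P)
    fix s :: real
    have e: "Re (cinn w (\<rho> *v u)) = Re (cinn u (\<rho> *v w))"
    proof -
      have "cinn w (\<rho> *v u) = cinn (\<rho> *v w) u" using cinn_mv[of w \<rho> u] H by simp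
      also have "\<dots> = cnj (cinn u (\<rho> *v w))" by (simp add: cinn_cnj)
      finally show ?thesis by simp
    qed
    have "Re (cinn (w + s *\<^sub>R u) (\<rho> *v (w + s *\<^sub>R u))) =
          Re (cinn w (\<rho> *v w)) + s * Re (cinn w (\<rho> *v u)) + s * Re (cinn u (\<rho> *v w))
          + s^2 * Re (cinn u (\<rho> *v u))"
      by (simp add: matrix_vector_right_distrib mv_scaleR cinn_add_left cinn_add_right
          cinn_scaleR_left cinn_scaleR_right power2_eq_square algebra_simps)
    then show "0 \<le> 2 * s * Re (cinn u (\<rho> *v w)) + s^2 * Re (cinn u (\<rho> *v u))"
      using P[of "w + s *\<^sub>R u"] assms(2) e by simp
  qed
  show ?thesis using a0[of "\<rho> *v w"] cinn_self_zero by blast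
qed

lemma col_eq_zero:
  assumes "\<And>i. (\<rho>::complex^'n^'n) *v (\<chi> l. K$l$i) = 0"
  shows "\<rho> ** (K::complex^'p^'n) = 0"
  using assms by (simp add: vec_eq_iff matrix_matrix_mult_def matrix_vector_mult_def)

lemma ker_psd:
  assumes "psd \<rho>" "\<rho> ** K + K ** \<rho> = 0"
  shows "\<rho> ** K = 0 \<and> K ** \<rho> = 0"
proof -
  have H: "cadj \<rho> = \<rho>" using assms(1) by (simp add: psd_alt)
  have e1: "K ** \<rho> = - (\<rho> ** K)" using assms(2) by (simp add: eq_neg_iff_add_eq_0 add.commute)
  have t1: "trace (cadj K ** \<rho> ** K) = trace (\<rho> ** K ** cadj K)"
    by (metis matrix_mul_assoc trace_cyc)
  have t2: "trace (K ** \<rho> ** cadj K) = - trace (\<rho> ** K ** cadj K)"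
  proof -
    have "K ** \<rho> ** cadj K = - (\<rho> ** K ** cadj K)"
      by (simp add: e1 matrix_neg_left)
    then show ?thesis by (simp add: trace_def sum_negf)
  qed
  have n1: "0 \<le> Re (trace (cadj K ** \<rho> ** cadj (cadj K)))" by (rule trace_sandwich_nonneg[OF assms(1)])
  have n2: "0 \<le> Re (trace (K ** \<rho> ** cadj K))" by (rule trace_sandwich_nonneg[OF assms(1)])
  have z: "Re (trace (cadj K ** \<rho> ** cadj (cadj K))) = 0" using n1 n2 t1 t2 by simp
  have z2: "Re (trace (K ** \<rho> ** cadj K)) = 0" using n1 n2 t1 t2 by simp
  have a: "\<rho> ** K = 0"
  proof (rule col_eq_zero)
    fix i
    have "(\<Sum>i\<in>UNIV. Re (cinn (\<chi> l. K$l$i) (\<rho> *v (\<chi> l. K$l$i)))) = 0"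
      using z trace_sandwich[of "cadj K" \<rho>] by (simp add: Re_sum)
    then have "Re (cinn (\<chi> l. K$l$i) (\<rho> *v (\<chi> l. K$l$i))) = 0"
      using assms(1) by (subst (asm) sum_nonneg_eq_0_iff) (auto simp: psd_alt)
    then show "\<rho> *v (\<chi> l. K$l$i) = 0" by (rule psd_zero[OF assms(1)])
  qed
  have b: "\<rho> ** cadj K = 0"
  proof (rule col_eq_zero)
    fix i
    have "(\<Sum>i\<in>UNIV. Re (cinn (\<chi> l. cnj (K$i$l)) (\<rho> *v (\<chi> l. cnj (K$i$l))))) = 0"
      using z2 by (simp add: trace_sandwich)
    then have "Re (cinn (\<chi> l. cnj (K$i$l)) (\<rho> *v (\<chi> l. cnj (K$i$l)))) = 0"
      using assms(1) by (subst (asm) sum_nonneg_eq_0_iff) (auto simp: psd_alt)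
    then show "\<rho> *v (\<chi> l. cadj K$l$i) = 0" by (simp add: psd_zero[OF assms(1)])
  qed
  have "K ** \<rho> = cadj (\<rho> ** cadj K)" by (simp add: cadj_mult H)
  with a b show ?thesis by simp
qed

lemma trace_zero[simp]: "trace (0::complex^'n^'n) = 0" by (simp add: trace_def)
lemma trace_neg: "trace (- (A::complex^'n^'n)) = - trace A"
  by (simp add: trace_def sum_negf)

lemma trace_herm_sq_nonneg:
  assumes "psd \<rho>" "cadj G = G"
  shows "0 \<le> Re (trace (\<rho> ** G ** G))"
proof -
  have "trace (\<rho> ** G ** G) = trace (G ** \<rho> ** cadj G)"
    using assms(2) by (metis matrix_mul_assoc trace_cyc)
  then show ?thesis using trace_sandwich_nonneg[OF assms(1)] by simp
qed

lemma var_bound: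
  assumes "psd \<rho>" "cadj L = L" "cadj X = X"
    and D: "D = (1/2) *\<^sub>R (L ** \<rho> + \<rho> ** L)"
  shows "2 * Re (trace (D ** X)) - Re (trace (\<rho> ** X ** X)) \<le> Re (trace (\<rho> ** L ** L))"
proof -
  have "0 \<le> Re (trace (\<rho> ** (L - X) ** (L - X)))"
    using assms by (intro trace_herm_sq_nonneg) (auto simp: cadj_diff)
  also have "\<rho> ** (L - X) ** (L - X) = \<rho> ** L ** L - \<rho> ** L ** X - \<rho> ** X ** L + \<rho> ** X ** X"
    by (simp add: matrix_diff_ldistrib matrix_diff_rdistrib matrix_mul_assoc)
  finally have 1: "0 \<le> Re (trace (\<rho> ** L ** L)) - Re (trace (\<rho> ** L ** X)) - Re (trace (\<rho> ** X ** L))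
       + Re (trace (\<rho> ** X ** X))" by (simp add: trace_add trace_sub)
  have "trace (D ** X) = (1/2) * (trace (L ** \<rho> ** X) + trace (\<rho> ** L ** X))"
    by (simp add: D matrix_scaleR_left matrix_add_rdistrib' trace_scaleR trace_add scR)
  moreover have "trace (L ** \<rho> ** X) = trace (\<rho> ** X ** L)"
    by (metis matrix_mul_assoc trace_cyc)
  ultimately have "trace (D ** X) * 2 = trace (\<rho> ** X ** L) + trace (\<rho> ** L ** X)"
    by simp
  then have "Re (trace (D ** X) * 2) = Re (trace (\<rho> ** X ** L) + trace (\<rho> ** L ** X))" by simp
  then have "2 * Re (trace (D ** X)) = Re (trace (\<rho> ** X ** L)) + Re (trace (\<rho> ** L ** X))"
    by simp
  with 1 show ?thesis by simp
qed

lemma trace_DL: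
  fixes \<rho> :: "complex^'n^'n"
  assumes D: "D = (1/2) *\<^sub>R (L ** \<rho> + \<rho> ** L)"
  shows "trace (D ** L) = trace (\<rho> ** L ** L)"
proof -
  have "trace (D ** L) = (1/2) * (trace (L ** \<rho> ** L) + trace (\<rho> ** L ** L))"
    by (simp add: D matrix_scaleR_left matrix_add_rdistrib' trace_scaleR trace_add scR)
  moreover have "trace (L ** \<rho> ** L) = trace (\<rho> ** L ** L)"
    by (metis matrix_mul_assoc trace_cyc)
  ultimately show ?thesis by simp
qed

lemma sld_value_unique:
  assumes "psd \<rho>" "cadj L = L" "cadj L' = L'"
    and "(1/2) *\<^sub>R (L ** \<rho> + \<rho> ** L) = (1/2) *\<^sub>R (L' ** \<rho> + \<rho> ** L')"
  shows "trace (\<rho> ** L' ** L') = trace (\<rho> ** L ** L)"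
proof -
  define K where "K = L - L'"
  have "\<rho> ** K + K ** \<rho> = 0"
  proof -
    have "L ** \<rho> + \<rho> ** L = L' ** \<rho> + \<rho> ** L'" using assms(4) by simp
    then show ?thesis by (simp add: K_def matrix_diff_ldistrib matrix_diff_rdistrib algebra_simps)
  qed
  then have k: "\<rho> ** K = 0" "K ** \<rho> = 0" using ker_psd[OF assms(1)] by auto
  have L': "L' = L - K" by (simp add: K_def)
  have "\<rho> ** L' ** L' = \<rho> ** L ** L - \<rho> ** L ** K - \<rho> ** K ** L + \<rho> ** K ** K"
    by (simp add: L' matrix_diff_ldistrib matrix_diff_rdistrib matrix_mul_assoc)
  also have "\<dots> = \<rho> ** L ** L - \<rho> ** L ** K" by (simp add: k)
  finally have "trace (\<rho> ** L' ** L') = trace (\<rho> ** L ** L) - trace (\<rho> ** L ** K)"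
    by (simp add: trace_sub)
  moreover have "trace (\<rho> ** L ** K) = trace (K ** \<rho> ** L)" by (metis matrix_mul_assoc trace_cyc)
  ultimately show ?thesis by (simp add: k)
qed

lemma qfi_eq:
  assumes "psd (\<rho> x)" "(\<rho> has_vector_derivative D) (at x)" "cadj L = L"
    "D = (1/2) *\<^sub>R (L ** \<rho> x + \<rho> x ** L)"
  shows "qfi \<rho> x = Re (trace (\<rho> x ** L ** L))"
proof -
  let ?P = "\<lambda>I. \<exists>D L. (\<rho> has_vector_derivative D) (at x) \<and> hermitian L \<and>
      D = (1/2) *\<^sub>R (L ** \<rho> x + \<rho> x ** L) \<and> I = Re (trace (\<rho> x ** L ** L))"
  have ex: "?P (Re (trace (\<rho> x ** L ** L)))" using assms by (auto simp: hermitian_cadj)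
  then have "?P (qfi \<rho> x)" unfolding qfi_def by (rule someI)
  then obtain D' L' where d': "(\<rho> has_vector_derivative D') (at x)" "cadj L' = L'"
    "D' = (1/2) *\<^sub>R (L' ** \<rho> x + \<rho> x ** L')" "qfi \<rho> x = Re (trace (\<rho> x ** L' ** L'))"
    by (auto simp: hermitian_cadj)
  have "D' = D" using d'(1) assms(2) by (rule vector_derivative_unique_at)
  then show ?thesis using sld_value_unique[OF assms(1) assms(3) d'(2)] d' assms(4) by simp
qed

lemma lin_deriv:
  fixes f :: "'a::euclidean_space \<Rightarrow> 'b::real_normed_vector"
  assumes "linear f" "(g has_vector_derivative g') F"
  shows "((\<lambda>t. f (g t)) has_vector_derivative f g') F"
  using assms(1) by (simp add: linear_conv_bounded_linear bounded_linear.has_vector_derivative[OF _ assms(2)])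

lemma linear_cadj: "linear (cadj :: complex^'n^'m \<Rightarrow> complex^'m^'n)"
  by (rule linearI) (auto simp: cadj_add cadj_scaleR)

lemma herm_deriv:
  assumes "\<And>t. cadj (\<rho> t) = \<rho> t" "(\<rho> has_vector_derivative D) (at x)"
  shows "cadj D = (D::complex^'n^'n)"
proof -
  have "((\<lambda>t. cadj (\<rho> t)) has_vector_derivative cadj D) (at x)"
    by (rule lin_deriv[OF linear_cadj assms(2)])
  then have "(\<rho> has_vector_derivative cadj D) (at x)" using assms(1) by simp
  then show ?thesis using assms(2) by (rule vector_derivative_unique_at)
qed

lemma linear_quad: "linear (\<lambda>A::complex^'n^'n. Re (cinn v (A *v v)))"
proof (rule linearI)
  fix A B :: "complex^'n^'n" and c :: real
  have "(A + B) *v v = A *v v + B *v v"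
    by (simp add: vec_eq_iff matrix_vector_mult_def distrib_right sum.distrib)
  then show "Re (cinn v ((A + B) *v v)) = Re (cinn v (A *v v)) + Re (cinn v (B *v v))"
    by (simp add: cinn_add_right)
  have "(c *\<^sub>R A) *v v = c *\<^sub>R (A *v v)"
    by (simp add: vec_eq_iff matrix_vector_mult_def scR sum_distrib_left mult_ac)
  then show "Re (cinn v ((c *\<^sub>R A) *v v)) = c *\<^sub>R Re (cinn v (A *v v))"
    by (simp add: cinn_scaleR_right)
qed

lemma deriv_vanish:
  assumes psd: "\<And>t. psd (\<rho> t)" and d: "(\<rho> has_vector_derivative D) (at x)"
    and v: "\<rho> x *v v = 0"
  shows "Re (cinn v (D *v v)) = 0"
proof -
  have "((\<lambda>t. Re (cinn v (\<rho> t *v v))) has_vector_derivative Re (cinn v (D *v v))) (at x)"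
    by (rule lin_deriv[OF linear_quad d])
  then have dr: "((\<lambda>t. Re (cinn v (\<rho> t *v v))) has_real_derivative Re (cinn v (D *v v))) (at x)"
    by (simp add: has_real_derivative_iff_has_vector_derivative)
  show ?thesis
  proof (rule DERIV_local_min[OF dr, of 1])
    show "\<forall>y. \<bar>x - y\<bar> < 1 \<longrightarrow> Re (cinn v (\<rho> x *v v)) \<le> Re (cinn v (\<rho> y *v v))"
      using v psd by (auto simp: psd_alt)
  qed simp
qed

lemma inner_cinn: "inner v w = Re (cinn v w)"
  by (simp add: inner_vec_def cinn_def inner_complex_def Re_sum)

lemma polarize:
  assumes "cadj D = D" "\<And>w. w \<in> W \<Longrightarrow> Re (cinn w (D *v w)) = 0"
    and "\<And>u v. u \<in> W \<Longrightarrow> v \<in> W \<Longrightarrow> u + v \<in> W" "\<And>c u. u \<in> W \<Longrightarrow> c *s u \<in> W"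
    and "u \<in> W" "v \<in> W"
  shows "cinn u (D *v v) = 0"
proof -
  define z where "z = cinn u (D *v v)"
  have zc: "cinn v (D *v u) = cnj z"
    unfolding z_def using cinn_mv[of u D v] assms(1) by (simp add: cinn_cnj)
  have mvs: "D *v (c *s w) = c *s (D *v w)" for c w
    by (simp add: vec_eq_iff matrix_vector_mult_def sum_distrib_left mult_ac)
  have "Re (cinn (u+v) (D *v (u+v))) = 0" using assms by blast
  then have r: "Re z = 0" using assms(2)[OF assms(5)] assms(2)[OF assms(6)] zc
    by (simp add: matrix_vector_right_distrib cinn_add_left cinn_add_right z_def)
  have "Re (cinn (u + \<i> *s v) (D *v (u + \<i> *s v))) = 0" using assms by blast
  then have i: "Im z = 0" using assms(2)[OF assms(5)] assms(2)[OF assms(6)] zc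
    by (simp add: matrix_vector_right_distrib cinn_add_left cinn_add_right mvs cinn_scale_left
        cinn_scale_right z_def)
  show ?thesis using r i by (simp add: z_def complex_eq_iff)
qed

lemma cinn_axis: "cinn (axis i 1) (w::complex^'n) = w $ i"
proof -
  have "(\<lambda>ia. cnj ((axis i 1::complex^'n)$ia) * w$ia) = (\<lambda>ia. if ia = i then w$ia else 0)"
    by (auto simp: axis_def)
  then show ?thesis unfolding cinn_def by (simp only:) simp
qed

lemma cinn_diff_left: "cinn (u - v) w = cinn u w - cinn v w"
  by (simp add: cinn_def left_diff_distrib sum_subtractf)

lemma mv_scale: "(A::complex^'n^'m) *v (c *s v) = c *s (A *v v)"
  by (simp add: vec_eq_iff matrix_vector_mult_def sum_distrib_left mult_ac)

lemma mult_col: "((A::complex^'n^'m) ** K) $ i $ j = (A *v (\<chi> l. K$l$j)) $ i"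
  by (simp add: matrix_matrix_mult_def matrix_vector_mult_def)

lemma col_zero:
  assumes "(A::complex^'n^'m) ** K = 0"
  shows "A *v (\<chi> l. K$l$j) = 0"
proof -
  have "(A *v (\<chi> l. K$l$j)) $ i = 0" for i using assms mult_col[of A K i j] by simp
  then show ?thesis by (simp add: vec_eq_iff)
qed

lemma cols_fixed:
  assumes "\<And>j. (A::complex^'n^'n) *v (\<chi> l. K$l$j) = (\<chi> l. K$l$j)"
  shows "A ** (K::complex^'p^'n) = K"
  using assms by (simp add: vec_eq_iff mult_col)

lemma proj_exists:
  fixes \<rho>0 :: "complex^'n^'n"
  obtains P where "cadj P = P" "\<And>j. \<rho>0 *v (\<chi> i. P$i$j) = 0"
    "\<And>w. \<rho>0 *v w = 0 \<Longrightarrow> P *v w = w"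
proof -
  define W where "W = {w. \<rho>0 *v w = 0}"
  have sub: "subspace W"
    unfolding subspace_def W_def
    by (auto simp: matrix_vector_right_distrib mv_scaleR)
  have spW: "span W = W" using sub by simp
  have "\<forall>k. \<exists>a b. a \<in> W \<and> (\<forall>w\<in>W. orthogonal b w) \<and> axis k 1 = a + b"
  proof
    fix k :: 'n
    obtain y z where "y \<in> span W" "\<And>w. w \<in> span W \<Longrightarrow> orthogonal z w" "(axis k 1::complex^'n) = y + z"
      by (rule orthogonal_subspace_decomp_exists[of W "axis k 1"]) blast
    then show "\<exists>a b. a \<in> W \<and> (\<forall>w\<in>W. orthogonal b w) \<and> axis k 1 = a + b"
      using spW by auto
  qed
  then obtain a b where ab: "\<And>k. a k \<in> W" "\<And>k w. w \<in> W \<Longrightarrow> orthogonal (b k) w"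
    "\<And>k. axis k 1 = a k + b k"
    by metis
  have Wc: "c *s w \<in> W" if "w \<in> W" for c w using that by (simp add: W_def mv_scale)
  have bo: "cinn (b k) w = 0" if "w \<in> W" for k w
  proof -
    have "Re (cinn (b k) w) = 0" using ab(2)[OF that] by (simp add: orthogonal_def inner_cinn)
    moreover have "Re (cinn (b k) (\<i> *s w)) = 0" using ab(2)[OF Wc[OF that]] by (simp add: orthogonal_def inner_cinn)
    ultimately show ?thesis by (simp add: cinn_scale_right complex_eq_iff)
  qed
  have a_eq: "a k = axis k 1 - b k" for k using ab(3)[of k] by simp
  have f3: "a k $ i = cinn (a i) (a k)" for i k
  proof -
    have "a k $ i = cinn (axis i 1) (a k)" by (simp add: cinn_axis)
    also have "\<dots> = cinn (a i) (a k) + cinn (b i) (a k)" by (simp add: ab(3) cinn_add_left)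
    finally show ?thesis using bo[OF ab(1)] by simp
  qed
  have cnjP: "cnj (a i $ k) = a k $ i" for i k by (simp add: f3 cinn_cnj)
  define P where "P = (\<chi> i k. a k $ i)"
  show ?thesis
  proof
    show "cadj P = P"
      by (simp add: vec_eq_iff P_def cnjP)
    show "\<rho>0 *v (\<chi> i. P$i$j) = 0" for j using ab(1)[of j] by (simp add: P_def W_def)
    show "P *v w = w" if "\<rho>0 *v w = 0" for w
    proof -
      have wW: "w \<in> W" using that by (simp add: W_def)
      have "(P *v w) $ i = w $ i" for i
      proof -
        have "(P *v w) $ i = (\<Sum>k\<in>UNIV. a k $ i * w $ k)"
          by (simp add: P_def matrix_vector_mult_def)
        also have "\<dots> = (\<Sum>k\<in>UNIV. cnj (a i $ k) * w $ k)"
          by (simp add: cnjP)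
        also have "\<dots> = cinn (a i) w" by (simp add: cinn_def)
        also have "\<dots> = w $ i" by (simp add: a_eq cinn_diff_left cinn_axis bo[OF wW])
        finally show ?thesis .
      qed
      then show ?thesis by (simp add: vec_eq_iff)
    qed
  qed
qed

lemma sandwich_entry:
  assumes "cadj P = P"
  shows "(P ** (D::complex^'n^'n) ** P) $ i $ j = cinn (\<chi> l. P$l$i) (D *v (\<chi> l. P$l$j))"
proof -
  have pc: "P $ i $ k = cnj (P $ k $ i)" for i k using assms by (metis cadj_nth)
  show ?thesis
    by (simp add: matrix_matrix_mult_def matrix_vector_mult_def cinn_def sum_distrib_left
        sum_distrib_right mult_ac pc[of i]) (rule sum.swap)
qed

lemma trace_DK_zero:
  assumes psd: "\<And>t. psd (\<rho> t)" and d: "(\<rho> has_vector_derivative D) (at x)"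
    and k: "\<rho> x ** K = 0" "K ** \<rho> x = 0"
  shows "trace (D ** K) = 0"
proof -
  have H: "cadj (\<rho> t) = \<rho> t" for t using psd by (simp add: psd_alt)
  have HD: "cadj D = D" using herm_deriv[OF H d] .
  obtain P where P: "cadj P = P" "\<And>j. \<rho> x *v (\<chi> i. P$i$j) = 0"
    "\<And>w. \<rho> x *v w = 0 \<Longrightarrow> P *v w = w" by (rule proj_exists[of "\<rho> x"]) blast
  have PK: "P ** K = K"
    by (rule cols_fixed, rule P(3), rule col_zero[OF k(1)])
  have "\<rho> x ** cadj K = 0" using k(2) H by (metis cadj_mult cadj_zero)
  then have "P ** cadj K = cadj K"
    by (intro cols_fixed P(3) col_zero)
  then have KP: "K ** P = K" using P(1) by (metis cadj_cadj cadj_mult)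
  have PDP: "P ** D ** P = 0"
  proof -
    have "(P ** D ** P) $ i $ j = 0" for i j
      unfolding sandwich_entry[OF P(1)]
      apply (rule polarize[OF HD, where W = "{w. \<rho> x *v w = 0}"])
      using deriv_vanish[OF psd d] P(2) by (auto simp: matrix_vector_right_distrib mv_scale)
    then show ?thesis by (simp add: vec_eq_iff)
  qed
  have "trace (D ** K) = trace (D ** (P ** K ** P))" using PK KP by simp
  also have "\<dots> = trace ((P ** D ** P) ** K)"
    by (metis matrix_mul_assoc trace_cyc)
  finally show ?thesis by (simp add: PDP)
qed

lemma inner_mat: "inner (A::complex^'n^'n) B = Re (trace (cadj A ** B))"
  apply (simp add: inner_vec_def inner_complex_def trace_def matrix_matrix_mult_def Re_sum)
  apply (subst sum.swap) apply simp
  done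

lemma selfadj_range:
  fixes T :: "'a::euclidean_space \<Rightarrow> 'a"
  assumes lin: "linear T" and sa: "\<And>u v. inner u (T v) = inner (T u) v"
    and ker: "\<And>k. T k = 0 \<Longrightarrow> inner v k = 0"
  shows "\<exists>u. T u = v"
proof -
  have sub: "subspace (range T)" by (rule linear_subspace_image[OF lin subspace_UNIV])
  then have sp: "span (range T) = range T" by simp
  obtain y z where yz: "y \<in> span (range T)" "\<And>w. w \<in> span (range T) \<Longrightarrow> orthogonal z w" "v = y + z"
    by (rule orthogonal_subspace_decomp_exists[of "range T" v]) blast
  have "inner (T z) (T z) = inner z (T (T z))" by (simp add: sa)
  also have "\<dots> = 0" using yz(2)[of "T (T z)"] sp by (simp add: orthogonal_def)
  finally have "T z = 0" by simp
  then have "inner v z = 0" by (rule ker)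
  moreover have "inner y z = 0" using yz(2)[OF yz(1)] by (simp add: orthogonal_def inner_commute)
  ultimately have "inner z z = 0" using yz(3) by (simp add: inner_add_left)
  then have "z = 0" by simp
  then show ?thesis using yz(1,3) sp by auto
qed

lemma sld_exists:
  assumes psd: "\<And>t. psd (\<rho> t)" and d: "(\<rho> has_vector_derivative D) (at x)"
  shows "\<exists>L. cadj L = L \<and> D = (1/2) *\<^sub>R (L ** \<rho> x + \<rho> x ** L)"
proof -
  define r where "r = \<rho> x"
  have H: "cadj r = r" using psd by (simp add: psd_alt r_def)
  have HD: "cadj D = D" using herm_deriv[of \<rho> D x] psd d by (simp add: psd_alt)
  define T where "T = (\<lambda>L. r ** L + L ** r)"
  have lin: "linear T"
    unfolding T_def by (rule linearI)
      (auto simp: matrix_add_ldistrib matrix_add_rdistrib' matrix_scaleR_left matrix_scaleR_right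
        scaleR_add_right)
  have sa: "inner u (T v) = inner (T u) v" for u v
  proof -
    have "trace (cadj u ** (v ** r)) = trace (r ** cadj u ** v)"
      by (metis matrix_mul_assoc trace_cyc)
    then show ?thesis
      by (simp add: T_def inner_mat cadj_add cadj_mult H matrix_add_ldistrib matrix_add_rdistrib'
          trace_add matrix_mul_assoc)
  qed
  have ker: "inner (2 *\<^sub>R D) k = 0" if "T k = 0" for k
  proof -
    have "r ** k = 0 \<and> k ** r = 0" using ker_psd[of r k] psd that by (simp add: T_def r_def)
    then have "trace (D ** k) = 0" using trace_DK_zero[OF psd d] by (simp add: r_def)
    then show ?thesis by (simp add: inner_mat cadj_scaleR HD matrix_scaleR_left trace_scaleR)
  qed
  obtain u where u: "T u = 2 *\<^sub>R D" using selfadj_range[OF lin sa ker] by blast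
  have Tc: "T (cadj u) = cadj (T u)" by (simp add: T_def cadj_add cadj_mult H add.commute)
  define L where "L = (1/2) *\<^sub>R (u + cadj u)"
  have TL: "T L = 2 *\<^sub>R D"
  proof -
    have "T L = (1/2) *\<^sub>R (T u + T (cadj u))"
      using lin by (simp add: L_def linear_add linear_scale)
    also have "\<dots> = 2 *\<^sub>R D" using u Tc by (simp add: cadj_scaleR HD)
    finally show ?thesis .
  qed
  have "cadj L = L" by (simp add: L_def cadj_scaleR cadj_add add.commute)
  moreover have "D = (1/2) *\<^sub>R (L ** \<rho> x + \<rho> x ** L)"
    using TL by (simp add: T_def r_def add.commute)
  ultimately show ?thesis by blast
qed

lemma qfi_exists:
  assumes psd: "\<And>t. psd (\<rho> t)" and d: "\<rho> differentiable (at x)"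
  shows "\<exists>D L. (\<rho> has_vector_derivative D) (at x) \<and> cadj L = L \<and>
     D = (1/2) *\<^sub>R (L ** \<rho> x + \<rho> x ** L) \<and> qfi \<rho> x = Re (trace (\<rho> x ** L ** L))"
proof -
  obtain D where D: "(\<rho> has_vector_derivative D) (at x)"
    using d vector_derivative_works by blast
  obtain L where L: "cadj L = L" "D = (1/2) *\<^sub>R (L ** \<rho> x + \<rho> x ** L)"
    using sld_exists[OF psd D] by blast
  show ?thesis using D L qfi_eq[OF psd D L] by blast
qed

definition kr :: "'k set \<Rightarrow> ('k \<Rightarrow> complex^'n^'m) \<Rightarrow> complex^'n^'n \<Rightarrow> complex^'m^'m" where
  "kr K T A = (\<Sum>k\<in>K. T k ** A ** cadj (T k))"

definition krd :: "'k set \<Rightarrow> ('k \<Rightarrow> complex^'n^'m) \<Rightarrow> complex^'m^'m \<Rightarrow> complex^'n^'n" where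
  "krd K T Y = (\<Sum>k\<in>K. cadj (T k) ** Y ** T k)"

lemma linear_kr: "linear (kr K T)"
  unfolding kr_def
  by (rule linearI) (auto simp: matrix_add_ldistrib matrix_add_rdistrib' matrix_scaleR_left
      matrix_scaleR_right sum.distrib scaleR_sum_right)

lemma cadj_kr: "cadj (kr K T A) = kr K T (cadj A)"
  by (simp add: kr_def cadj_sum cadj_mult matrix_mul_assoc)

lemma cadj_krd: "cadj (krd K T Y) = krd K T (cadj Y)"
  by (simp add: krd_def cadj_sum cadj_mult matrix_mul_assoc)

lemma trace_kr: "trace (kr K T A ** Y) = trace (A ** krd K T Y)"
proof -
  have "trace (T k ** A ** cadj (T k) ** Y) = trace (A ** (cadj (T k) ** Y ** T k))" for k
    by (metis matrix_mul_assoc trace_cyc)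
  then show ?thesis
    by (simp add: kr_def krd_def matrix_sum_rdistrib matrix_sum_ldistrib trace_sum)
qed

lemma cinn_sum_right: "cinn u (\<Sum>k\<in>K. w k) = (\<Sum>k\<in>K. cinn u (w k))"
  by (induction K rule: infinite_finite_induct) (auto simp: cinn_add_right)

lemma mv_sum_left: "(\<Sum>k\<in>K. A k) *v (v::complex^'n) = (\<Sum>k\<in>K. (A k::complex^'n^'m) *v v)"
  by (induction K rule: infinite_finite_induct) (auto simp: matrix_vector_mult_add_rdistrib)

lemma psd_kr: assumes "psd A" shows "psd (kr K T A)"
proof -
  have H: "cadj A = A" using assms by (simp add: psd_alt)
  have "0 \<le> Re (cinn v (kr K T A *v v))" for v
  proof -
    have "cinn v (kr K T A *v v) = (\<Sum>k\<in>K. cinn (cadj (T k) *v v) (A *v (cadj (T k) *v v)))"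
      by (simp add: kr_def mv_sum_left cinn_sum_right matrix_vector_mul_assoc[symmetric] cinn_mv)
    then show ?thesis using assms by (simp add: Re_sum psd_alt sum_nonneg)
  qed
  then show ?thesis using H by (simp add: psd_alt cadj_kr)
qed

lemma psd_scale: assumes "psd A" "0 \<le> c" shows "psd (c *\<^sub>R A)"
proof -
  have "(c *\<^sub>R A) *v v = c *\<^sub>R (A *v v)" for v
    by (simp add: vec_eq_iff matrix_vector_mult_def scR sum_distrib_left mult_ac)
  then show ?thesis using assms by (simp add: psd_alt cadj_scaleR cinn_scaleR_right)
qed

lemma KS:
  fixes T :: "'k \<Rightarrow> complex^'n^'m" and \<rho> R :: "complex^'n^'n"
  assumes fin: "finite K" and comp: "(\<Sum>k\<in>K. cadj (T k) ** T k) + cadj R ** R = mat 1"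
    and HY: "cadj Y = Y" and psd: "psd \<rho>"
  shows "Re (trace (\<rho> ** krd K T Y ** krd K T Y)) \<le> Re (trace (\<rho> ** krd K T (Y ** Y)))"
proof -
  define X where "X = krd K T Y"
  have HX: "cadj X = X" by (simp add: X_def cadj_krd HY)
  define C where "C k = Y ** T k - T k ** X" for k
  have CC: "cadj (C k) ** C k = cadj (T k) ** Y ** Y ** T k - cadj (T k) ** Y ** T k ** X
      - X ** (cadj (T k) ** Y ** T k) + X ** (cadj (T k) ** T k) ** X" for k
    by (simp add: C_def cadj_diff cadj_mult HY HX matrix_diff_ldistrib matrix_diff_rdistrib
        matrix_mul_assoc)
  have sumT: "(\<Sum>k\<in>K. cadj (T k) ** T k) = mat 1 - cadj R ** R" using comp
    by (simp add: eq_diff_eq)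
  have s0: "(\<Sum>k\<in>K. cadj (T k) ** Y ** Y ** T k) = krd K T (Y ** Y)"
    by (simp add: krd_def matrix_mul_assoc)
  have s1: "(\<Sum>k\<in>K. cadj (T k) ** Y ** T k ** X) = X ** X"
  proof -
    have "(\<Sum>k\<in>K. cadj (T k) ** Y ** T k ** X) = (\<Sum>k\<in>K. cadj (T k) ** Y ** T k) ** X"
      by (simp add: matrix_sum_rdistrib)
    then show ?thesis by (simp add: X_def krd_def)
  qed
  have s2: "(\<Sum>k\<in>K. X ** (cadj (T k) ** Y ** T k)) = X ** X"
  proof -
    have "(\<Sum>k\<in>K. X ** (cadj (T k) ** Y ** T k)) = X ** (\<Sum>k\<in>K. cadj (T k) ** Y ** T k)"
      by (simp add: matrix_sum_ldistrib)
    then show ?thesis by (simp add: X_def krd_def)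
  qed
  have s3: "(\<Sum>k\<in>K. X ** (cadj (T k) ** T k) ** X) = X ** (\<Sum>k\<in>K. cadj (T k) ** T k) ** X"
    by (simp add: matrix_sum_ldistrib matrix_sum_rdistrib)
  have "(\<Sum>k\<in>K. cadj (C k) ** C k) = krd K T (Y ** Y) - X ** X - X ** X
        + X ** (\<Sum>k\<in>K. cadj (T k) ** T k) ** X"
    unfolding CC by (simp only: sum.distrib sum_subtractf s0 s1 s2 s3)
  also have "\<dots> = krd K T (Y ** Y) - X ** X - cadj (R ** X) ** (R ** X)"
    by (simp add: sumT matrix_diff_ldistrib matrix_diff_rdistrib cadj_mult HX matrix_mul_assoc)
  finally have eq: "krd K T (Y ** Y) - X ** X = (\<Sum>k\<in>K. cadj (C k) ** C k) + cadj (R ** X) ** (R ** X)"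
    by (simp add: algebra_simps)
  have pos: "0 \<le> Re (trace (\<rho> ** (cadj G ** G)))" for G :: "complex^'n^'n"
  proof -
    have "trace (\<rho> ** (cadj G ** G)) = trace (G ** \<rho> ** cadj G)" by (metis matrix_mul_assoc trace_cyc)
    then show ?thesis using trace_sandwich_nonneg[OF psd] by simp
  qed
  have pos2: "0 \<le> Re (trace (\<rho> ** (cadj G ** G)))" for G :: "complex^'n^'m"
  proof -
    have "trace (\<rho> ** (cadj G ** G)) = trace (G ** \<rho> ** cadj G)" by (metis matrix_mul_assoc trace_cyc)
    then show ?thesis using trace_sandwich_nonneg[OF psd] by simp
  qed
  have "0 \<le> Re (trace (\<rho> ** (krd K T (Y ** Y) - X ** X)))"
    unfolding eq
    by (simp add: matrix_add_ldistrib matrix_sum_ldistrib trace_add trace_sum Re_sum)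
      (intro add_nonneg_nonneg sum_nonneg pos2 pos[of "R ** X"])
  then show ?thesis by (simp add: X_def matrix_diff_ldistrib trace_sub matrix_mul_assoc)
qed

lemma linear_trace: "linear (trace :: complex^'n^'n \<Rightarrow> complex)"
  by (rule linearI) (auto simp: trace_add trace_scaleR)

lemma linear_Re_trace_kr: "linear (\<lambda>A. Re (trace (kr K T A)))"
  by (rule linearI) (simp_all add: linear_add[OF linear_kr] linear_scale[OF linear_kr]
      trace_add trace_scaleR)

lemma trace_of_real_scale: "trace (c *\<^sub>R (A::complex^'n^'n)) = of_real c * trace A"
  by (simp add: trace_scaleR scR)

lemma out_props:
  fixes T :: "'k \<Rightarrow> complex^'n^'m"
    and \<rho>i :: "real \<Rightarrow> complex^'n^'n" and \<rho>o :: "real \<Rightarrow> complex^'m^'m" and c :: "real \<Rightarrow> real"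
  assumes psdi: "\<And>t. psd (\<rho>i t)" and diffi: "\<And>t. \<rho>i differentiable (at t)"
    and out: "\<And>t. kr K T (\<rho>i t) = c t *\<^sub>R \<rho>o t" and cpos: "\<And>t. c t > 0"
    and tr1: "\<And>t. trace (\<rho>o t) = 1"
  shows "psd (\<rho>o t) \<and> \<rho>o differentiable (at t)"
proof -
  have ro: "\<rho>o t = (1 / c t) *\<^sub>R kr K T (\<rho>i t)" for t
    using out[of t] cpos[of t] by simp
  have ceq: "c t = Re (trace (kr K T (\<rho>i t)))" for t
    using out[of t] tr1[of t] by (simp add: trace_of_real_scale)
  have cfun: "c = (\<lambda>t. Re (trace (kr K T (\<rho>i t))))" using ceq by auto
  have psdo: "psd (\<rho>o t)" for t
    unfolding ro using cpos[of t] by (intro psd_scale psd_kr psdi) simp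
  have derivi: "(\<rho>i has_vector_derivative vector_derivative \<rho>i (at t)) (at t)" for t
    using diffi vector_derivative_works by blast
  have dkr: "((\<lambda>t. kr K T (\<rho>i t)) has_vector_derivative kr K T (vector_derivative \<rho>i (at t))) (at t)" for t
    by (rule lin_deriv[OF linear_kr derivi])
  have dc: "(c has_real_derivative Re (trace (kr K T (vector_derivative \<rho>i (at t))))) (at t)" for t
    unfolding cfun has_real_derivative_iff_has_vector_derivative
    by (rule lin_deriv[OF linear_Re_trace_kr derivi])
  have diffo: "\<rho>o differentiable (at t)" for t
  proof -
    have "(\<lambda>t. (1 / c t) *\<^sub>R kr K T (\<rho>i t)) differentiable (at t)"
      using cpos[of t] dc[of t] dkr[of t]
      by (intro differentiable_scaleR differentiable_divide)
        (auto intro: differentiableI_vector simp: real_differentiable_def)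
    moreover have "(\<lambda>t. (1 / c t) *\<^sub>R kr K T (\<rho>i t)) = \<rho>o" using ro by auto
    ultimately show ?thesis by simp
  qed
  show ?thesis using psdo diffo by blast
qed

lemma channel_mono:
  fixes T :: "'k \<Rightarrow> complex^'n^'m" and R :: "complex^'n^'n"
    and \<rho>i :: "real \<Rightarrow> complex^'n^'n" and \<rho>o :: "real \<Rightarrow> complex^'m^'m" and c :: "real \<Rightarrow> real"
  assumes fin: "finite K" and comp: "(\<Sum>k\<in>K. cadj (T k) ** T k) + cadj R ** R = mat 1"
    and psdi: "\<And>t. psd (\<rho>i t)" and diffi: "\<And>t. \<rho>i differentiable (at t)"
    and out: "\<And>t. kr K T (\<rho>i t) = c t *\<^sub>R \<rho>o t" and cpos: "\<And>t. c t > 0"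
    and tr1: "\<And>t. trace (\<rho>o t) = 1"
  shows "(\<forall>t. psd (\<rho>o t)) \<and> (\<forall>t. \<rho>o differentiable (at t)) \<and> c x * qfi \<rho>o x \<le> qfi \<rho>i x"
proof -
  have ro: "\<rho>o t = (1 / c t) *\<^sub>R kr K T (\<rho>i t)" for t
    using out[of t] cpos[of t] by simp
  have ceq: "c t = Re (trace (kr K T (\<rho>i t)))" for t
    using out[of t] tr1[of t] by (simp add: trace_of_real_scale)
  have cfun: "c = (\<lambda>t. Re (trace (kr K T (\<rho>i t))))" using ceq by auto
  have psdo: "psd (\<rho>o t)" for t
    unfolding ro using cpos[of t] by (intro psd_scale psd_kr psdi) simp
  have derivi: "(\<rho>i has_vector_derivative vector_derivative \<rho>i (at t)) (at t)" for t
    using diffi vector_derivative_works by blast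
  have dkr: "((\<lambda>t. kr K T (\<rho>i t)) has_vector_derivative kr K T (vector_derivative \<rho>i (at t))) (at t)" for t
    by (rule lin_deriv[OF linear_kr derivi])
  have dc: "(c has_real_derivative Re (trace (kr K T (vector_derivative \<rho>i (at t))))) (at t)" for t
    unfolding cfun has_real_derivative_iff_has_vector_derivative
    by (rule lin_deriv[OF linear_Re_trace_kr derivi])
  have diffo: "\<rho>o differentiable (at t)" for t
  proof -
    have "(\<lambda>t. (1 / c t) *\<^sub>R kr K T (\<rho>i t)) differentiable (at t)"
      using cpos[of t] dc[of t] dkr[of t]
      by (intro differentiable_scaleR differentiable_divide)
        (auto intro: differentiableI_vector simp: real_differentiable_def)
    moreover have "(\<lambda>t. (1 / c t) *\<^sub>R kr K T (\<rho>i t)) = \<rho>o" using ro by auto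
    ultimately show ?thesis by simp
  qed
  obtain Di Li where i: "(\<rho>i has_vector_derivative Di) (at x)" "cadj Li = Li"
    "Di = (1/2) *\<^sub>R (Li ** \<rho>i x + \<rho>i x ** Li)" "qfi \<rho>i x = Re (trace (\<rho>i x ** Li ** Li))"
    using qfi_exists[OF psdi diffi] by blast
  obtain Do Y where o: "(\<rho>o has_vector_derivative Do) (at x)" "cadj Y = Y"
    "Do = (1/2) *\<^sub>R (Y ** \<rho>o x + \<rho>o x ** Y)" "qfi \<rho>o x = Re (trace (\<rho>o x ** Y ** Y))"
    using qfi_exists[OF psdo diffo] by blast
  define X where "X = krd K T Y"
  have HX: "cadj X = X" by (simp add: X_def cadj_krd o(2))
  have vb: "2 * Re (trace (Di ** X)) - Re (trace (\<rho>i x ** X ** X)) \<le> qfi \<rho>i x"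
    using var_bound[OF psdi i(2) HX i(3)] i(4) by simp
  have Di_eq: "Di = vector_derivative \<rho>i (at x)"
    using i(1) derivi[of x] by (rule vector_derivative_unique_at)
  define c' where "c' = Re (trace (kr K T Di))"
  have d1: "((\<lambda>t. c t *\<^sub>R \<rho>o t) has_vector_derivative kr K T Di) (at x)"
    using dkr[of x] out Di_eq by simp
  have d2: "((\<lambda>t. c t *\<^sub>R \<rho>o t) has_vector_derivative (c x *\<^sub>R Do + c' *\<^sub>R \<rho>o x)) (at x)"
    using dc[of x] o(1) Di_eq unfolding c'_def by (intro has_vector_derivative_scaleR) auto
  have kD: "kr K T Di = c x *\<^sub>R Do + c' *\<^sub>R \<rho>o x"
    using d1 d2 by (rule vector_derivative_unique_at)
  have trDo: "trace Do = 0"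
  proof -
    have "((\<lambda>t. trace (\<rho>o t)) has_vector_derivative trace Do) (at x)"
      by (rule lin_deriv[OF linear_trace o(1)])
    then have "((\<lambda>t. 1) has_vector_derivative trace Do) (at x)" using tr1 by simp
    moreover have "((\<lambda>t. 1::complex) has_vector_derivative 0) (at x)" by (rule has_vector_derivative_const)
    ultimately show ?thesis by (rule vector_derivative_unique_at)
  qed
  have trY: "trace (\<rho>o x ** Y) = 0"
  proof -
    have "trace (Y ** \<rho>o x) = trace (\<rho>o x ** Y)" by (rule trace_cyc)
    then show ?thesis using trDo by (simp add: o(3) trace_of_real_scale trace_add)
  qed
  have "trace (Di ** X) = trace (kr K T Di ** Y)" by (simp add: X_def trace_kr)
  also have "\<dots> = of_real (c x) * trace (Do ** Y) + of_real c' * trace (\<rho>o x ** Y)"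
    by (simp add: kD matrix_add_rdistrib' matrix_scaleR_left trace_add trace_of_real_scale)
  also have "\<dots> = of_real (c x) * trace (\<rho>o x ** Y ** Y)"
    using trace_DL[OF o(3)] trY by simp
  finally have t1: "Re (trace (Di ** X)) = c x * qfi \<rho>o x" using o(4) by simp
  have "Re (trace (\<rho>i x ** X ** X)) \<le> Re (trace (\<rho>i x ** krd K T (Y ** Y)))"
    unfolding X_def by (rule KS[OF fin comp o(2) psdi])
  also have "trace (\<rho>i x ** krd K T (Y ** Y)) = trace (kr K T (\<rho>i x) ** (Y ** Y))"
    by (simp add: trace_kr)
  also have "\<dots> = of_real (c x) * trace (\<rho>o x ** Y ** Y)"
    by (simp add: out matrix_scaleR_left trace_of_real_scale matrix_mul_assoc)
  finally have t2: "Re (trace (\<rho>i x ** X ** X)) \<le> c x * qfi \<rho>o x" using o(4) by simp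
  show ?thesis using vb t1 t2 psdo diffo by auto
qed

definition cs :: "complex \<Rightarrow> complex^'n^'m \<Rightarrow> complex^'n^'m" where
  "cs c A = (\<chi> i j. c * A$i$j)"
definition outer :: "complex^'m \<Rightarrow> complex^'n \<Rightarrow> complex^'n^'m" where
  "outer u v = (\<chi> i j. u$i * cnj (v$j))"

lemma cs_nth[simp]: "cs c A $ i $ j = c * A $ i $ j" by (simp add: cs_def)
lemma outer_nth[simp]: "outer u v $ i $ j = u$i * cnj (v$j)" by (simp add: outer_def)
lemma tensor_nth[simp]: "tensor A B $ p $ q = A $ fst p $ fst q * B $ snd p $ snd q"
  by (simp add: tensor_def)

lemma cs_c_zero[simp]: "cs c 0 = 0" by (simp add: vec_eq_iff)
lemma cs_one[simp]: "cs 1 A = A" by (simp add: vec_eq_iff)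
lemma cs_zero[simp]: "cs 0 A = 0" by (simp add: vec_eq_iff)
lemma cs_mult_left: "cs c A ** B = cs c (A ** B)"
  by (simp add: vec_eq_iff matrix_matrix_mult_def sum_distrib_left mult_ac)
lemma cs_mult_right: "A ** cs c B = cs c (A ** B)"
  by (simp add: vec_eq_iff matrix_matrix_mult_def sum_distrib_left mult_ac)
lemma cs_cs: "cs a (cs b A) = cs (a * b) A" by (simp add: vec_eq_iff mult_ac)
lemma cadj_cs: "cadj (cs c A) = cs (cnj c) (cadj A)" by (simp add: vec_eq_iff)
lemma trace_cs: "trace (cs c A) = c * trace A" by (simp add: trace_def sum_distrib_left)
lemma cs_of_real: "cs (of_real r) A = r *\<^sub>R A" by (simp add: vec_eq_iff scR)
lemma cs_add: "cs c (A + B) = cs c A + cs c B" by (simp add: vec_eq_iff distrib_left)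

lemma outer_mult: "outer u v ** outer w z = cs (cinn v w) (outer u z)"
  by (simp add: vec_eq_iff matrix_matrix_mult_def cinn_def sum_distrib_left sum_distrib_right mult_ac)
lemma cadj_outer: "cadj (outer u v) = outer v u" by (simp add: vec_eq_iff mult.commute)
lemma ket_bra_outer: "ket_bra f = outer f f" by (simp add: ket_bra_def outer_def)
lemma trace_outer: "trace (outer u v) = cinn v u" by (simp add: trace_def cinn_def mult.commute)
lemma outer_sandwich: "outer u v ** A ** outer w z = cs (cinn v (A *v w)) (outer u z)"
  apply (simp add: vec_eq_iff matrix_matrix_mult_def matrix_vector_mult_def cinn_def
      sum_distrib_left sum_distrib_right mult_ac)
  apply (intro allI) apply (rule sum.swap) done

lemma sum_outer_axis: "(\<Sum>i\<in>UNIV. outer (axis i 1) (axis i 1)) = (mat 1 :: complex^'n^'n)"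
proof -
  have "(\<Sum>i\<in>UNIV. outer (axis i 1) (axis i 1) :: complex^'n^'n) $ p $ q = mat 1 $ p $ q" for p q
  proof -
    have "(\<Sum>i\<in>UNIV. outer (axis i 1) (axis i 1) :: complex^'n^'n) $ p $ q
        = (\<Sum>i\<in>UNIV. (if p = i \<and> q = i then 1 else 0))"
      by (simp add: sum_component axis_def) (intro sum.cong, auto)
    also have "\<dots> = mat 1 $ p $ q"
      by (cases "p = q") (auto simp: mat_def intro!: sum.neutral)
    finally show ?thesis .
  qed
  then show ?thesis by (simp add: vec_eq_iff)
qed

lemma sum_prod_univ: "(\<Sum>r\<in>(UNIV::('a::finite \<times> 'b::finite) set). g r) = (\<Sum>k\<in>UNIV. \<Sum>b\<in>UNIV. g (k, b))"
  apply (subst UNIV_Times_UNIV[symmetric])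
  apply (subst sum.cartesian_product)
  apply (simp add: case_prod_beta')
  done

lemma tensor_mult: "tensor A B ** tensor C D = tensor (A ** C) (B ** D)"
proof -
  have "(tensor A B ** tensor C D) $ p $ q = tensor (A ** C) (B ** D) $ p $ q" for p q
    by (simp add: matrix_matrix_mult_def sum_prod_univ sum_product mult_ac)
  then show ?thesis by (simp add: vec_eq_iff)
qed

lemma cadj_tensor: "cadj (tensor A B) = tensor (cadj A) (cadj B)" by (simp add: vec_eq_iff)
lemma trace_tensor: "trace (tensor A B) = trace A * trace B"
  by (simp add: trace_def sum_prod_univ sum_product)
lemma tensor_add_left: "tensor (A + A') B = tensor A B + tensor A' B"
  by (simp add: vec_eq_iff distrib_right)
lemma tensor_scaleR_left: "tensor (c *\<^sub>R A) B = c *\<^sub>R tensor A B"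
  by (simp add: vec_eq_iff scR)
lemma tensor_cs_left: "tensor (cs c A) B = cs c (tensor A B)" by (simp add: vec_eq_iff)
lemma tensor_cs_right: "tensor A (cs c B) = cs c (tensor A B)" by (simp add: vec_eq_iff mult_ac)
lemma tensor_zero_left[simp]: "tensor 0 B = 0" by (simp add: vec_eq_iff)
lemma tensor_zero_right[simp]: "tensor A 0 = 0" by (simp add: vec_eq_iff)
lemma tensor_sum_left: "tensor (\<Sum>k\<in>K. A k) B = (\<Sum>k\<in>K. tensor (A k) B)"
  by (induction K rule: infinite_finite_induct) (auto simp: tensor_add_left)
lemma tensor_sum_right: "tensor A (\<Sum>k\<in>K. B k) = (\<Sum>k\<in>K. tensor A (B k))"
  by (induction K rule: infinite_finite_induct) (auto simp: vec_eq_iff distrib_left sum_distrib_left)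
lemma tensor_mat1: "tensor (mat 1) (mat 1) = (mat 1 :: complex^('n::finite\<times>'a::finite)^('n\<times>'a))"
proof -
  have "tensor (mat 1) (mat 1) $ p $ q = (mat 1 :: complex^('n\<times>'a)^('n\<times>'a)) $ p $ q" for p q
    by (cases p, cases q) (simp add: mat_def)
  then show ?thesis by (simp add: vec_eq_iff)
qed

lemma cs_sum: "cs c (\<Sum>k\<in>K. A k) = (\<Sum>k\<in>K. cs c (A k))"
  by (induction K rule: infinite_finite_induct) (auto simp: cs_add)
lemma sum_cs: "(\<Sum>k\<in>K. cs (c k) A) = cs (\<Sum>k\<in>K. c k) A"
  by (induction K rule: infinite_finite_induct) (auto simp: vec_eq_iff distrib_right)

lemma trace_herm_real: "cadj A = A \<Longrightarrow> trace A = of_real (Re (trace A))"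
proof -
  assume "cadj A = A"
  then have "trace A = cnj (trace A)" using trace_cadj[of A] by simp
  then have "Im (trace A) = - Im (trace A)" by (metis complex_cnj_cancel_iff complex.sel(2) cnj.sel(2))
  then have "Im (trace A) = 0" by simp
  then show ?thesis by (simp add: complex_eq_iff)
qed

lemma kraus_op_kr: "kraus_op M k A = kr {..<k} M A"
  by (simp add: kraus_op_def kr_def adj_cadj)

lemma trace_kr_id: "trace (kr K T A) = trace (A ** (\<Sum>k\<in>K. cadj (T k) ** T k))"
  using trace_kr[of K T A "mat 1"] by (simp add: krd_def)

definition emb :: "complex^'n^'n \<Rightarrow> complex^'a \<Rightarrow> complex^'n^('n\<times>'a)" where
  "emb B v = (\<chi> q k. B $ fst q $ k * v $ snd q)"

lemma emb_adj_emb: "cadj (emb B v) ** emb C w = cs (cinn v w) (cadj B ** C)"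
proof -
  have "(cadj (emb B v) ** emb C w) $ k $ l = cs (cinn v w) (cadj B ** C) $ k $ l" for k l
    apply (simp add: emb_def matrix_matrix_mult_def sum_prod_univ cinn_def sum_product mult_ac)
    apply (rule sum.swap) done
  then show ?thesis by (simp add: vec_eq_iff)
qed

lemma emb_sandwich: "emb B v ** A ** cadj (emb C w) = tensor (B ** A ** cadj C) (outer v w)"
proof -
  have "(emb B v ** A ** cadj (emb C w)) $ p $ q = tensor (B ** A ** cadj C) (outer v w) $ p $ q" for p q
    by (simp add: emb_def matrix_matrix_mult_def sum_distrib_left sum_distrib_right mult_ac)
  then show ?thesis by (simp add: vec_eq_iff)
qed

definition PA :: "(nat \<Rightarrow> complex^'a) \<Rightarrow> nat set \<Rightarrow> complex^'a^'a" where
  "PA f A = (\<Sum>\<alpha>\<in>A. outer (f \<alpha>) (f \<alpha>))"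

context
  fixes f :: "nat \<Rightarrow> complex^'a::finite" and J :: nat
  assumes orth: "\<And>\<alpha> \<beta>. \<alpha> \<in> {1..J} \<Longrightarrow> \<beta> \<in> {1..J} \<Longrightarrow>
                    cinn (f \<alpha>) (f \<beta>) = (if \<alpha> = \<beta> then 1 else 0)"
begin

lemma oo_left: "\<alpha> \<in> {1..J} \<Longrightarrow> \<beta> \<in> {1..J} \<Longrightarrow>
   outer (f \<alpha>) (f \<alpha>) ** outer (f \<beta>) w = (if \<alpha> = \<beta> then outer (f \<alpha>) w else 0)"
  by (simp add: outer_mult orth)

lemma oo_right: "\<alpha> \<in> {1..J} \<Longrightarrow> \<beta> \<in> {1..J} \<Longrightarrow>
   outer w (f \<beta>) ** outer (f \<alpha>) (f \<alpha>) = (if \<alpha> = \<beta> then outer w (f \<alpha>) else 0)"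
  by (simp add: outer_mult orth)

lemma PA_left: "A \<subseteq> {1..J} \<Longrightarrow> \<beta> \<in> {1..J} \<Longrightarrow>
   PA f A ** outer (f \<beta>) w = (if \<beta> \<in> A then outer (f \<beta>) w else 0)"
proof -
  assume A: "A \<subseteq> {1..J}" and b: "\<beta> \<in> {1..J}"
  have fin: "finite A" using A finite_subset by blast
  have "PA f A ** outer (f \<beta>) w = (\<Sum>\<alpha>\<in>A. if \<alpha> = \<beta> then outer (f \<alpha>) w else 0)"
    unfolding PA_def matrix_sum_rdistrib using A b by (intro sum.cong) (auto simp: oo_left)
  also have "\<dots> = (if \<beta> \<in> A then outer (f \<beta>) w else 0)"
    using fin by (simp add: sum.delta')
  finally show ?thesis .
qed

lemma PA_right: "A \<subseteq> {1..J} \<Longrightarrow> \<beta> \<in> {1..J} \<Longrightarrow>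
   outer w (f \<beta>) ** PA f A = (if \<beta> \<in> A then outer w (f \<beta>) else 0)"
proof -
  assume A: "A \<subseteq> {1..J}" and b: "\<beta> \<in> {1..J}"
  have fin: "finite A" using A finite_subset by blast
  have "outer w (f \<beta>) ** PA f A = (\<Sum>\<alpha>\<in>A. if \<alpha> = \<beta> then outer w (f \<alpha>) else 0)"
    unfolding PA_def matrix_sum_ldistrib using A b by (intro sum.cong) (auto simp: oo_right)
  also have "\<dots> = (if \<beta> \<in> A then outer w (f \<beta>) else 0)"
    using fin by (simp add: sum.delta')
  finally show ?thesis .
qed

lemma PA_idem: "A \<subseteq> {1..J} \<Longrightarrow> PA f A ** PA f A = PA f A"
proof -
  assume A: "A \<subseteq> {1..J}"
  have "PA f A ** PA f A = (\<Sum>\<beta>\<in>A. PA f A ** outer (f \<beta>) (f \<beta>))"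
    by (simp add: PA_def[of f A] matrix_sum_ldistrib)
  also have "\<dots> = (\<Sum>\<beta>\<in>A. outer (f \<beta>) (f \<beta>))"
  proof (intro sum.cong refl)
    fix x assume "x \<in> A"
    then show "PA f A ** outer (f x) (f x) = outer (f x) (f x)"
      using A PA_left[OF A, of x "f x"] by auto
  qed
  finally show ?thesis by (simp add: PA_def)
qed

end

lemma PA_orth: "(\<And>\<alpha>. \<alpha> \<in> A \<Longrightarrow> cinn (f \<alpha>) w = 0) \<Longrightarrow> PA f A ** outer w z = 0"
  by (simp add: PA_def matrix_sum_rdistrib outer_mult)

lemma cadj_PA: "cadj (PA f A) = PA f A"
  by (simp add: PA_def cadj_sum cadj_outer)

lemma mv_axis: "((A::complex^'n^'m) *v axis i 1) $ j = A $ j $ i"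
proof -
  have "(\<Sum>k\<in>UNIV. A$j$k * (axis i 1::complex^'n)$k) = (\<Sum>k\<in>UNIV. if i = k then A$j$k else 0)"
    by (rule sum.cong) (simp_all add: axis_def)
  also have "\<dots> = A$j$i" by simp
  finally show ?thesis by (simp add: matrix_vector_mult_def)
qed


theorem theorem1:
  fixes \<rho> :: "real \<Rightarrow> 'n::finite cmat"
    and J :: nat and Jk :: "nat \<Rightarrow> nat" and M :: "nat \<Rightarrow> nat \<Rightarrow> 'n cmat"
    and S :: "nat set"
    and f :: "nat \<Rightarrow> complex^'a::finite" and f0 :: "complex^'a"
    and \<phi> :: "complex^'n" and x :: real
    and p :: "nat \<Rightarrow> real \<Rightarrow> real" and pS pF :: "real \<Rightarrow> real"
    and \<sigma> :: "nat \<Rightarrow> real \<Rightarrow> 'n cmat"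
    and \<sigma>QA \<sigma>QA_S \<sigma>QA_cond :: "real \<Rightarrow> ('n \<times> 'a) cmat"
  assumes dens: "\<And>t. density_op (\<rho> t)"
    and diff: "\<And>t. \<rho> differentiable (at t)"
    and complete: "(\<Sum>\<alpha>\<in>{1..J}. \<Sum>j<Jk \<alpha>. adj (M \<alpha> j) ** M \<alpha> j) = mat 1"
    and p_def: "\<And>\<alpha> t. p \<alpha> t = Re (trace (kraus_op (M \<alpha>) (Jk \<alpha>) (\<rho> t)))"
    and p_pos: "\<And>\<alpha> t. \<alpha> \<in> {1..J} \<Longrightarrow> p \<alpha> t > 0"
    and \<sigma>_def: "\<And>\<alpha> t. \<sigma> \<alpha> t = (1 / p \<alpha> t) *\<^sub>R kraus_op (M \<alpha>) (Jk \<alpha>) (\<rho> t)"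
    and S_sub: "S \<subseteq> {1..J}"
    and pS_def: "\<And>t. pS t = (\<Sum>\<alpha>\<in>S. p \<alpha> t)"
    and pF_def: "\<And>t. pF t = 1 - pS t"
    and pS_pos: "\<And>t. pS t > 0"
    and pF_pos: "\<And>t. pF t > 0"
    and f_orth: "\<And>\<alpha> \<beta>. \<alpha> \<in> {1..J} \<Longrightarrow> \<beta> \<in> {1..J} \<Longrightarrow>
                    cinner (f \<alpha>) (f \<beta>) = (if \<alpha> = \<beta> then 1 else 0)"
    and f0_norm: "cinner f0 f0 = 1"
    and f0_orth: "\<And>\<alpha>. \<alpha> \<in> S \<Longrightarrow> cinner f0 (f \<alpha>) = 0"
    and \<phi>_norm: "cinner \<phi> \<phi> = 1"
    and \<sigma>QA_def: "\<And>t. \<sigma>QA t =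
        (\<Sum>\<alpha>\<in>{1..J}. p \<alpha> t *\<^sub>R tensor (\<sigma> \<alpha> t) (ket_bra (f \<alpha>)))"
    and \<sigma>QA_S_def: "\<And>t. \<sigma>QA_S t =
        (\<Sum>\<alpha>\<in>S. p \<alpha> t *\<^sub>R tensor (\<sigma> \<alpha> t) (ket_bra (f \<alpha>)))
          + pF t *\<^sub>R tensor (ket_bra \<phi>) (ket_bra f0)"
    and \<sigma>QA_cond_def: "\<And>t. \<sigma>QA_cond t =
        (\<Sum>\<alpha>\<in>S. (p \<alpha> t / pS t) *\<^sub>R tensor (\<sigma> \<alpha> t) (ket_bra (f \<alpha>)))"
  shows "qfi \<rho> x \<ge> qfi \<sigma>QA x \<and> qfi \<sigma>QA x \<ge> qfi \<sigma>QA_S x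
         \<and> qfi \<sigma>QA_S x \<ge> pS x * qfi \<sigma>QA_cond x
         \<and> (\<forall>\<alpha>. S = {\<alpha>} \<longrightarrow> pS x * qfi \<sigma>QA_cond x = p \<alpha> x * qfi (\<sigma> \<alpha>) x)"

proof -
  let ?I = "{1..J}"
  define Kt where "Kt \<alpha> t = kraus_op (M \<alpha>) (Jk \<alpha>) (\<rho> t)" for \<alpha> t
  define P where "P \<alpha> = outer (f \<alpha>) (f \<alpha>)" for \<alpha>
  have finI: "finite ?I" by simp
  have psd\<rho>: "psd (\<rho> t)" for t using dens by (simp add: density_op_def)
  have tr\<rho>: "trace (\<rho> t) = 1" for t using dens by (simp add: density_op_def)
  have orth': "\<And>\<alpha> \<beta>. \<alpha> \<in> ?I \<Longrightarrow> \<beta> \<in> ?I \<Longrightarrow> cinn (f \<alpha>) (f \<beta>) = (if \<alpha> = \<beta> then 1 else 0)"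
    using f_orth by (simp add: cinner_cinn)
  have f0n: "cinn f0 f0 = 1" using f0_norm by (simp add: cinner_cinn)
  have \<phi>n: "cinn \<phi> \<phi> = 1" using \<phi>_norm by (simp add: cinner_cinn)
  have f0o: "cinn (f \<alpha>) f0 = 0" if "\<alpha> \<in> S" for \<alpha>
    using f0_orth[OF that] by (metis cinner_cinn cinn_cnj complex_cnj_zero)
  have psdK: "psd (Kt \<alpha> t)" for \<alpha> t by (simp add: Kt_def kraus_op_kr psd_kr psd\<rho>)
  have trK: "trace (Kt \<alpha> t) = of_real (p \<alpha> t)" for \<alpha> t
    using trace_herm_real[of "Kt \<alpha> t"] psdK[of \<alpha> t] p_def[of \<alpha> t] by (simp add: psd_alt Kt_def)
  have pK: "p \<alpha> t *\<^sub>R \<sigma> \<alpha> t = Kt \<alpha> t" if "\<alpha> \<in> ?I" for \<alpha> t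
    using p_pos[OF that, of t] by (simp add: \<sigma>_def Kt_def)
  have tr\<sigma>: "trace (\<sigma> \<alpha> t) = 1" if "\<alpha> \<in> ?I" for \<alpha> t
    using p_pos[OF that, of t] trK[of \<alpha> t] by (simp add: \<sigma>_def Kt_def trace_of_real_scale)
  have PP: "P \<alpha> ** P \<beta> = (if \<alpha> = \<beta> then P \<alpha> else 0)" if "\<alpha> \<in> ?I" "\<beta> \<in> ?I" for \<alpha> \<beta>
    using that by (simp add: P_def outer_mult orth')
  have cadjP: "cadj (P \<alpha>) = P \<alpha>" for \<alpha> by (simp add: P_def cadj_outer)
  have trP: "trace (P \<alpha>) = 1" if "\<alpha> \<in> ?I" for \<alpha> using that by (simp add: P_def trace_outer orth')
  have \<sigma>QA_alt: "\<sigma>QA t = (\<Sum>\<alpha>\<in>?I. tensor (Kt \<alpha> t) (P \<alpha>))" for t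
    unfolding \<sigma>QA_def by (intro sum.cong refl) (simp add: tensor_scaleR_left[symmetric] pK P_def ket_bra_outer)
  define K1 where "K1 = Sigma ?I (\<lambda>\<alpha>. {..<Jk \<alpha>})"
  define T1 where "T1 = (\<lambda>(\<alpha>, j). emb (M \<alpha> j) (f \<alpha>))"
  have finK1: "finite K1" by (simp add: K1_def)
  have sumT1: "(\<Sum>k\<in>K1. cadj (T1 k) ** T1 k) = mat 1"
  proof -
    have "(\<Sum>k\<in>K1. cadj (T1 k) ** T1 k) = (\<Sum>\<alpha>\<in>?I. \<Sum>j<Jk \<alpha>. cadj (T1 (\<alpha>, j)) ** T1 (\<alpha>, j))"
      unfolding K1_def by (subst sum.Sigma) auto
    also have "\<dots> = (\<Sum>\<alpha>\<in>?I. \<Sum>j<Jk \<alpha>. adj (M \<alpha> j) ** M \<alpha> j)"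
      by (intro sum.cong refl) (simp add: T1_def emb_adj_emb orth' adj_cadj)
    finally show ?thesis using complete by simp
  qed
  have comp1: "(\<Sum>k\<in>K1. cadj (T1 k) ** T1 k) + cadj (0::complex^'n^'n) ** 0 = mat 1"
    using sumT1 by simp
  have kr1: "kr K1 T1 (\<rho> t) = 1 *\<^sub>R \<sigma>QA t" for t
  proof -
    have "kr K1 T1 (\<rho> t) = (\<Sum>\<alpha>\<in>?I. \<Sum>j<Jk \<alpha>. T1 (\<alpha>, j) ** \<rho> t ** cadj (T1 (\<alpha>, j)))"
      unfolding kr_def K1_def by (subst sum.Sigma) auto
    also have "\<dots> = (\<Sum>\<alpha>\<in>?I. tensor (Kt \<alpha> t) (P \<alpha>))"
      by (intro sum.cong refl)
        (simp add: T1_def emb_sandwich Kt_def kraus_op_kr kr_def tensor_sum_left P_def)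
    finally show ?thesis by (simp add: \<sigma>QA_alt)
  qed
  have tr1: "trace (\<sigma>QA t) = 1" for t
    using trace_kr_id[of K1 T1 "\<rho> t"] kr1[of t] sumT1 tr\<rho>[of t] by simp
  have sum_p: "(\<Sum>\<alpha>\<in>?I. p \<alpha> t) = 1" for t
  proof -
    have "trace (\<sigma>QA t) = (\<Sum>\<alpha>\<in>?I. of_real (p \<alpha> t))"
      unfolding \<sigma>QA_alt trace_sum by (intro sum.cong refl) (simp add: trace_tensor trK trP)
    then show ?thesis using tr1[of t] by (metis of_real_eq_1_iff of_real_sum)
  qed
  have S1: "(\<forall>t. psd (\<sigma>QA t)) \<and> (\<forall>t. \<sigma>QA differentiable (at t)) \<and> 1 * qfi \<sigma>QA x \<le> qfi \<rho> x"
    by (rule channel_mono[OF finK1 comp1 psd\<rho> diff kr1]) (simp_all add: tr1)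
  define i0 :: 'n where "i0 = undefined"
  define \<tau> where "\<tau> = tensor (ket_bra \<phi>) (ket_bra f0)"
  define T2 :: "nat \<times> 'n \<Rightarrow> complex^('n\<times>'a)^('n\<times>'a)" where "T2 = (\<lambda>(\<alpha>, i). if \<alpha> \<in> S then (if i = i0 then tensor (mat 1) (P \<alpha>) else 0)
       else tensor (outer \<phi> (axis i 1)) (outer f0 (f \<alpha>)))"
  define K2 where "K2 = ?I \<times> (UNIV :: 'n set)"
  define Q :: "complex^('n\<times>'a)^('n\<times>'a)" where "Q = tensor (mat 1) (PA f ?I)"
  define R2 where "R2 = mat 1 - Q"
  have finK2: "finite K2" by (simp add: K2_def)
  have PAI: "PA f ?I = (\<Sum>\<alpha>\<in>?I. P \<alpha>)" by (simp add: PA_def P_def)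
  have per\<alpha>: "(\<Sum>i\<in>UNIV. cadj (T2 (\<alpha>, i)) ** T2 (\<alpha>, i)) = tensor (mat 1) (P \<alpha>)" if a: "\<alpha> \<in> ?I" for \<alpha>
  proof (cases "\<alpha> \<in> S")
    case True
    have "cadj (T2 (\<alpha>, i)) ** T2 (\<alpha>, i) = (if i = i0 then tensor (mat 1) (P \<alpha>) else 0)" for i
      using True a by (simp add: T2_def cadj_tensor cadjP tensor_mult PP)
    then show ?thesis by simp
  next
    case False
    have "cadj (T2 (\<alpha>, i)) ** T2 (\<alpha>, i) = tensor (outer (axis i 1) (axis i 1)) (P \<alpha>)" for i
      using False by (simp add: T2_def cadj_tensor cadj_outer tensor_mult outer_mult \<phi>n f0n P_def)
    then show ?thesis by (simp add: tensor_sum_left[symmetric] sum_outer_axis)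
  qed
  have sumT2: "(\<Sum>k\<in>K2. cadj (T2 k) ** T2 k) = Q"
  proof -
    have "(\<Sum>k\<in>K2. cadj (T2 k) ** T2 k) = (\<Sum>\<alpha>\<in>?I. \<Sum>i\<in>UNIV. cadj (T2 (\<alpha>, i)) ** T2 (\<alpha>, i))"
      unfolding K2_def by (subst sum.cartesian_product) (simp add: case_prod_beta')
    also have "\<dots> = (\<Sum>\<alpha>\<in>?I. tensor (mat 1) (P \<alpha>))" by (intro sum.cong refl) (simp add: per\<alpha>)
    finally show ?thesis unfolding Q_def PAI tensor_sum_right .
  qed
  have QH: "cadj Q = Q" by (simp add: Q_def cadj_tensor cadj_PA)
  have QQ: "Q ** Q = Q"
    using PA_idem[of J f ?I] orth' by (simp add: Q_def tensor_mult)
  have comp2: "(\<Sum>k\<in>K2. cadj (T2 k) ** T2 k) + cadj R2 ** R2 = mat 1"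
    by (simp add: sumT2 R2_def cadj_diff QH matrix_diff_ldistrib matrix_diff_rdistrib QQ)
  have tens3: "tensor A B ** tensor C D ** tensor E F = tensor (A ** C ** E) (B ** D ** F)"
    for A C E :: "complex^'n^'n" and B D F :: "complex^'a^'a"
    by (simp add: tensor_mult)
  have kr\<alpha>: "(\<Sum>i\<in>UNIV. T2 (\<alpha>, i) ** \<sigma>QA t ** cadj (T2 (\<alpha>, i))) =
       (if \<alpha> \<in> S then p \<alpha> t *\<^sub>R tensor (\<sigma> \<alpha> t) (P \<alpha>) else p \<alpha> t *\<^sub>R \<tau>)" if a: "\<alpha> \<in> ?I" for \<alpha> t
  proof (cases "\<alpha> \<in> S")
    case True
    have "tensor (mat 1) (P \<alpha>) ** \<sigma>QA t ** tensor (mat 1) (P \<alpha>) = tensor (Kt \<alpha> t) (P \<alpha>)"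
    proof -
      have "tensor (mat 1) (P \<alpha>) ** \<sigma>QA t ** tensor (mat 1) (P \<alpha>) =
            (\<Sum>\<beta>\<in>?I. tensor (Kt \<beta> t) (P \<alpha> ** P \<beta> ** P \<alpha>))"
        by (simp add: \<sigma>QA_alt matrix_sum_ldistrib matrix_sum_rdistrib tens3)
      also have "\<dots> = (\<Sum>\<beta>\<in>?I. if \<beta> = \<alpha> then tensor (Kt \<alpha> t) (P \<alpha>) else 0)"
        using a by (intro sum.cong refl) (auto simp: PP)
      finally show ?thesis using a by simp
    qed
    moreover have "T2 (\<alpha>, i) ** \<sigma>QA t ** cadj (T2 (\<alpha>, i)) =
        (if i = i0 then tensor (mat 1) (P \<alpha>) ** \<sigma>QA t ** tensor (mat 1) (P \<alpha>) else 0)" for i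
      using True by (simp add: T2_def cadj_tensor cadjP)
    moreover have "p \<alpha> t *\<^sub>R tensor (\<sigma> \<alpha> t) (P \<alpha>) = tensor (Kt \<alpha> t) (P \<alpha>)"
      by (simp add: tensor_scaleR_left[symmetric] pK[OF a])
    ultimately show ?thesis using True a by simp
  next
    case False
    have "T2 (\<alpha>, i) ** \<sigma>QA t ** cadj (T2 (\<alpha>, i)) = cs (Kt \<alpha> t $ i $ i) \<tau>" for i
    proof -
      have "T2 (\<alpha>, i) ** \<sigma>QA t ** cadj (T2 (\<alpha>, i)) =
          (\<Sum>\<beta>\<in>?I. tensor (outer \<phi> (axis i 1) ** Kt \<beta> t ** outer (axis i 1) \<phi>)
                      (outer f0 (f \<alpha>) ** P \<beta> ** outer (f \<alpha>) f0))"
        using False by (simp add: T2_def \<sigma>QA_alt matrix_sum_ldistrib matrix_sum_rdistrib tens3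
            cadj_tensor cadj_outer)
      also have "\<dots> = (\<Sum>\<beta>\<in>?I. if \<beta> = \<alpha> then cs (Kt \<alpha> t $ i $ i) \<tau> else 0)"
        using a by (intro sum.cong refl)
          (auto simp: P_def outer_sandwich outer_mult cs_mult_left cs_cs orth' cinn_axis mv_axis
            tensor_cs_left tensor_cs_right \<tau>_def ket_bra_outer)
      finally show ?thesis using a by simp
    qed
    then have "(\<Sum>i\<in>UNIV. T2 (\<alpha>, i) ** \<sigma>QA t ** cadj (T2 (\<alpha>, i))) = cs (trace (Kt \<alpha> t)) \<tau>"
      by (simp add: sum_cs trace_def)
    then show ?thesis using False by (simp add: trK cs_of_real)
  qed
  have kr2: "kr K2 T2 (\<sigma>QA t) = 1 *\<^sub>R \<sigma>QA_S t" for t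
  proof -
    have "kr K2 T2 (\<sigma>QA t) = (\<Sum>\<alpha>\<in>?I. \<Sum>i\<in>UNIV. T2 (\<alpha>, i) ** \<sigma>QA t ** cadj (T2 (\<alpha>, i)))"
      unfolding kr_def K2_def by (subst sum.cartesian_product) (simp add: case_prod_beta')
    also have "\<dots> = (\<Sum>\<alpha>\<in>?I. if \<alpha> \<in> S then p \<alpha> t *\<^sub>R tensor (\<sigma> \<alpha> t) (P \<alpha>) else p \<alpha> t *\<^sub>R \<tau>)"
      by (intro sum.cong refl) (simp add: kr\<alpha>)
    also have "\<dots> = (\<Sum>\<alpha>\<in>S. p \<alpha> t *\<^sub>R tensor (\<sigma> \<alpha> t) (P \<alpha>)) + (\<Sum>\<alpha>\<in>?I - S. p \<alpha> t *\<^sub>R \<tau>)"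
    proof -
      have "?I \<inter> {\<alpha>. \<alpha> \<in> S} = S" "?I \<inter> - {\<alpha>. \<alpha> \<in> S} = ?I - S" using S_sub by auto
      then show ?thesis by (simp add: sum.If_cases)
    qed
    also have "(\<Sum>\<alpha>\<in>?I - S. p \<alpha> t *\<^sub>R \<tau>) = pF t *\<^sub>R \<tau>"
    proof -
      have "(\<Sum>\<alpha>\<in>?I - S. p \<alpha> t) = (\<Sum>\<alpha>\<in>?I. p \<alpha> t) - (\<Sum>\<alpha>\<in>S. p \<alpha> t)"
        using S_sub by (simp add: sum_diff)
      then show ?thesis using sum_p[of t] by (simp add: scaleR_sum_left[symmetric] pF_def pS_def)
    qed
    finally show ?thesis by (simp add: \<sigma>QA_S_def \<tau>_def P_def ket_bra_outer)
  qed
  have tr2: "trace (\<sigma>QA_S t) = 1" for t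
  proof -
    have "trace (\<sigma>QA_S t) = (\<Sum>\<alpha>\<in>S. of_real (p \<alpha> t)) + of_real (pF t)"
      unfolding \<sigma>QA_S_def
      apply (simp add: trace_add trace_sum trace_of_real_scale trace_tensor ket_bra_outer trace_outer
          \<phi>n f0n)
      apply (intro sum.cong refl)
      subgoal for a using S_sub tr\<sigma>[of a t] orth'[of a a] by auto
      done
    then show ?thesis by (simp add: pF_def pS_def flip: of_real_sum)
  qed
  have S2: "(\<forall>t. psd (\<sigma>QA_S t)) \<and> (\<forall>t. \<sigma>QA_S differentiable (at t)) \<and> 1 * qfi \<sigma>QA_S x \<le> qfi \<sigma>QA x"
    using S1 by (intro channel_mono[OF finK2 comp2 _ _ kr2]) (simp_all add: tr2)
  define PS :: "complex^('n\<times>'a)^('n\<times>'a)" where "PS = tensor (mat 1) (PA f S)"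
  define R3 where "R3 = mat 1 - PS"
  have PSH: "cadj PS = PS" by (simp add: PS_def cadj_tensor cadj_PA)
  have PSS: "PS ** PS = PS"
    using PA_idem[of J f S] orth' S_sub by (simp add: PS_def tensor_mult)
  have comp3: "(\<Sum>k\<in>{()}. cadj ((\<lambda>_. PS) k) ** (\<lambda>_. PS) k) + cadj R3 ** R3 = mat 1"
    by (simp add: R3_def cadj_diff PSH matrix_diff_ldistrib matrix_diff_rdistrib PSS)
  have PSa: "PS ** tensor (\<sigma> \<alpha> t) (P \<alpha>) ** PS = tensor (\<sigma> \<alpha> t) (P \<alpha>)" if a: "\<alpha> \<in> S" for \<alpha> t
  proof -
    have aI: "\<alpha> \<in> ?I" using a S_sub by auto
    have "PA f S ** P \<alpha> ** PA f S = P \<alpha>"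
      using PA_left[of J f S \<alpha> "f \<alpha>"] PA_right[of J f S \<alpha> "f \<alpha>"] orth' S_sub aI a
      by (simp add: P_def matrix_mul_assoc[symmetric])
    then show ?thesis by (simp add: PS_def tens3)
  qed
  have PS\<tau>: "PS ** \<tau> ** PS = 0"
  proof -
    have "PA f S ** outer f0 f0 = 0" by (rule PA_orth) (simp add: f0o)
    then show ?thesis by (simp add: PS_def \<tau>_def tens3 ket_bra_outer)
  qed
  have PS\<tau>': "PS ** tensor (outer \<phi> \<phi>) (outer f0 f0) ** PS = 0"
    using PS\<tau> by (simp add: \<tau>_def ket_bra_outer)
  have kr3: "kr {()} (\<lambda>_. PS) (\<sigma>QA_S t) = pS t *\<^sub>R \<sigma>QA_cond t" for t
  proof -
    have "kr {()} (\<lambda>_. PS) (\<sigma>QA_S t) = PS ** \<sigma>QA_S t ** PS" by (simp add: kr_def PSH)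
    also have "\<dots> = (\<Sum>\<alpha>\<in>S. p \<alpha> t *\<^sub>R tensor (\<sigma> \<alpha> t) (P \<alpha>))"
      unfolding \<sigma>QA_S_def
      by (simp add: matrix_add_ldistrib matrix_add_rdistrib' matrix_sum_ldistrib matrix_sum_rdistrib
          matrix_scaleR_left matrix_scaleR_right PS\<tau>' PSa[unfolded P_def] P_def ket_bra_outer)
    also have "\<dots> = pS t *\<^sub>R \<sigma>QA_cond t"
      using pS_pos[of t] by (simp add: \<sigma>QA_cond_def scaleR_sum_right P_def ket_bra_outer)
    finally show ?thesis .
  qed
  have tr3: "trace (\<sigma>QA_cond t) = 1" for t
  proof -
    have "trace (\<sigma>QA_cond t) = (\<Sum>\<alpha>\<in>S. of_real (p \<alpha> t / pS t))"
      unfolding \<sigma>QA_cond_def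
      apply (simp add: trace_sum trace_of_real_scale trace_tensor ket_bra_outer trace_outer)
      apply (intro sum.cong refl)
      subgoal for a using S_sub tr\<sigma>[of a t] orth'[of a a] by auto
      done
    also have "\<dots> = of_real ((\<Sum>\<alpha>\<in>S. p \<alpha> t) / pS t)"
      by (simp add: sum_divide_distrib)
    finally show ?thesis using pS_pos[of t] by (simp add: pS_def)
  qed
  have S3: "(\<forall>t. psd (\<sigma>QA_cond t)) \<and> (\<forall>t. \<sigma>QA_cond differentiable (at t)) \<and> pS x * qfi \<sigma>QA_cond x \<le> qfi \<sigma>QA_S x"
    using S2 by (intro channel_mono[OF _ comp3 _ _ kr3]) (simp_all add: tr3 pS_pos)
  have fin: "pS x * qfi \<sigma>QA_cond x = p \<alpha> x * qfi (\<sigma> \<alpha>) x" if Sa: "S = {\<alpha>}" for \<alpha>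
  proof -
    have aI: "\<alpha> \<in> ?I" using Sa S_sub by auto
    have pSa: "pS t = p \<alpha> t" for t by (simp add: pS_def Sa)
    have cond: "\<sigma>QA_cond t = tensor (\<sigma> \<alpha> t) (P \<alpha>)" for t
      using p_pos[OF aI, of t] by (simp add: \<sigma>QA_cond_def Sa pSa P_def ket_bra_outer)
    have kr\<alpha>: "kr {..<Jk \<alpha>} (M \<alpha>) (\<rho> t) = p \<alpha> t *\<^sub>R \<sigma> \<alpha> t" for t
      using pK[OF aI, of t] by (simp add: Kt_def kraus_op_kr)
    have op: "psd (\<sigma> \<alpha> t) \<and> \<sigma> \<alpha> differentiable (at t)" for t
      by (rule out_props[OF psd\<rho> diff kr\<alpha>]) (simp_all add: p_pos[OF aI] tr\<sigma>[OF aI])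
    obtain D L where DL: "(\<sigma> \<alpha> has_vector_derivative D) (at x)" "cadj L = L"
      "D = (1/2) *\<^sub>R (L ** \<sigma> \<alpha> x + \<sigma> \<alpha> x ** L)" "qfi (\<sigma> \<alpha>) x = Re (trace (\<sigma> \<alpha> x ** L ** L))"
      using qfi_exists[of "\<sigma> \<alpha>" x] op by blast
    have linT: "linear (\<lambda>A::complex^'n^'n. tensor A (P \<alpha>))"
      by (rule linearI) (simp_all add: tensor_add_left tensor_scaleR_left)
    have dcond: "(\<sigma>QA_cond has_vector_derivative tensor D (P \<alpha>)) (at x)"
      using lin_deriv[OF linT DL(1)] cond by (simp add: fun_eq_iff[symmetric] cond[abs_def])
    have PPa: "P \<alpha> ** P \<alpha> = P \<alpha>" using PP[OF aI aI] by simp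
    have "qfi \<sigma>QA_cond x = Re (trace (\<sigma>QA_cond x ** tensor L (P \<alpha>) ** tensor L (P \<alpha>)))"
    proof (rule qfi_eq[OF _ dcond])
      show "psd (\<sigma>QA_cond x)" using S3 by simp
      show "cadj (tensor L (P \<alpha>)) = tensor L (P \<alpha>)" by (simp add: cadj_tensor DL(2) cadjP)
      show "tensor D (P \<alpha>) = (1/2) *\<^sub>R (tensor L (P \<alpha>) ** \<sigma>QA_cond x + \<sigma>QA_cond x ** tensor L (P \<alpha>))"
        by (simp add: cond tensor_mult PPa DL(3) tensor_scaleR_left tensor_add_left)
    qed
    also have "\<dots> = qfi (\<sigma> \<alpha>) x"
      by (simp add: cond tensor_mult PPa trace_tensor trP[OF aI] DL(4))
    finally show ?thesis by (simp add: pSa)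
  qed
  show ?thesis using S1 S2 S3 fin by auto
qed

end
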